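(* Let $\mathbb{K}$ be a field, $m\ge 3$, $R=\mathbb{K}[T_1,\dots,T_m]$, $S=R[X_1,\dots,X_m,W]$, and let $a_1,\dots,a_m,b_1,\dots,b_m$ be integers with $0\le b_i<a_i$ for all $i$ and $b_i\ne0$ for at least two $i$. Let $\mathcal{H}_0\subset S$ be the ideal generated by $\Gamma_0=\{\mathcal{P}(X_i,X_j)\mid 1\le j<i\le m+1\}$. Then $\operatorname{depth}(S/\operatorname{in}(\mathcal{H}_0))\ge m+1$, where $\operatorname{in}$ is taken with respect to $\tau$.
   Context: Write $\mathbf{T}^{\mathbf{b}}=T_1^{b_1}\cdots T_m^{b_m}$ and $X_{m+1}:=W$. Let $\Psi:S\to R$ be the $R$-algebra map $X_i\mapsto T_i^{a_i}$ ($1\le i\le m$), $W\mapsto\mathbf{T}^{\mathbf{b}}$. For monomials $M,N$ in $X_1,\dots,X_m,W$, with $g=\gcd(\Psi(M),\Psi(N))$, set $\mathcal{P}(M,N)=\frac{\Psi(N)}{g}M-\frac{\Psi(M)}{g}N$. (Thus $\mathcal{H}_0=L_1S$, the ideal generated by the linear part of the defining ideal of the Rees algebra of $I=\langle T_1^{a_1},\dots,T_m^{a_m},\mathbf{T}^{\mathbf{b}}\rangle$.) The order $\tau$ is lex on $S$ with $W>X_m>\cdots>X_1>T_1>\cdots>T_m$. *)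

theory Defs
  imports Main "HOL-Library.Poly_Mapping" "HOL-Library.Extended_Nat"
begin

text \<open>Variables. X (m+1) plays the role of W.\<close>
datatype var = T nat | X nat

type_synonym 'k mpoly = "(var \<Rightarrow>\<^sub>0 nat) \<Rightarrow>\<^sub>0 'k"

definition vars :: "nat \<Rightarrow> var set" where
  "vars m = {T i | i. 1 \<le> i \<and> i \<le> m} \<union> {X i | i. 1 \<le> i \<and> i \<le> m + 1}"

definition Sring :: "nat \<Rightarrow> 'k::field mpoly set" where
  "Sring m = {p :: 'k mpoly. \<forall>\<alpha>\<in>Poly_Mapping.keys p. Poly_Mapping.keys \<alpha> \<subseteq> vars m}"

definition mono :: "(var \<Rightarrow>\<^sub>0 nat) \<Rightarrow> 'k::field mpoly" where
  "mono \<alpha> = Poly_Mapping.single \<alpha> 1"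

definition varexp :: "var \<Rightarrow> (var \<Rightarrow>\<^sub>0 nat)" where
  "varexp v = Poly_Mapping.single v 1"

definition ideal_gen :: "nat \<Rightarrow> 'k::field mpoly set \<Rightarrow> 'k mpoly set" where
  "ideal_gen m G = {p. \<exists>F c. finite F \<and> F \<subseteq> G \<and> (\<forall>g\<in>F. c g \<in> Sring m)
                          \<and> p = (\<Sum>g\<in>F. c g * g)}"

text \<open>Exponent vector of Psi(M) for a monomial M with exponent vector alpha:
  T_i fixed, X_i to T_i^(a_i), W = X (m+1) to T^b.\<close>
definition psi_exp :: "nat \<Rightarrow> (nat \<Rightarrow> nat) \<Rightarrow> (nat \<Rightarrow> nat) \<Rightarrow> (var \<Rightarrow>\<^sub>0 nat) \<Rightarrow> (var \<Rightarrow>\<^sub>0 nat)" where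
  "psi_exp m a b \<alpha> = (\<Sum>i\<in>{1..m}. Poly_Mapping.single (T i)
       (Poly_Mapping.lookup \<alpha> (T i) + a i * Poly_Mapping.lookup \<alpha> (X i) + b i * Poly_Mapping.lookup \<alpha> (X (m + 1))))"

lift_definition gcd_exp :: "(var \<Rightarrow>\<^sub>0 nat) \<Rightarrow> (var \<Rightarrow>\<^sub>0 nat) \<Rightarrow> (var \<Rightarrow>\<^sub>0 nat)"
  is "\<lambda>f g v. min (f v) (g v)"
proof -
  fix f g :: "var \<Rightarrow> nat"
  assume "finite {x. f x \<noteq> 0}"
  moreover have "{x. min (f x) (g x) \<noteq> 0} \<subseteq> {x. f x \<noteq> 0}" by auto
  ultimately show "finite {x. min (f x) (g x) \<noteq> 0}" by (rule finite_subset[rotated])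
qed

text \<open>P(M,N) = (Psi(N)/g) M - (Psi(M)/g) N with g = gcd(Psi(M),Psi(N));
  monomials given by exponent vectors alpha (for M) and beta (for N).\<close>
definition Pbin :: "nat \<Rightarrow> (nat \<Rightarrow> nat) \<Rightarrow> (nat \<Rightarrow> nat) \<Rightarrow> (var \<Rightarrow>\<^sub>0 nat) \<Rightarrow> (var \<Rightarrow>\<^sub>0 nat) \<Rightarrow> 'k::field mpoly" where
  "Pbin m a b \<alpha> \<beta> =
     (let g = gcd_exp (psi_exp m a b \<alpha>) (psi_exp m a b \<beta>)
      in mono (psi_exp m a b \<beta> - g) * mono \<alpha> - mono (psi_exp m a b \<alpha> - g) * mono \<beta>)"

definition Gamma0 :: "nat \<Rightarrow> (nat \<Rightarrow> nat) \<Rightarrow> (nat \<Rightarrow> nat) \<Rightarrow> 'k::field mpoly set" where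
  "Gamma0 m a b = {Pbin m a b (varexp (X i)) (varexp (X j)) | i j. 1 \<le> j \<and> j < i \<and> i \<le> m + 1}"

definition H0 :: "nat \<Rightarrow> (nat \<Rightarrow> nat) \<Rightarrow> (nat \<Rightarrow> nat) \<Rightarrow> 'k::field mpoly set" where
  "H0 m a b = ideal_gen m (Gamma0 m a b)"

text \<open>Rank of variables: W > X_m > ... > X_1 > T_1 > ... > T_m.\<close>
fun rank :: "nat \<Rightarrow> var \<Rightarrow> nat" where
  "rank m (X i) = m + i"
| "rank m (T i) = m + 1 - i"

definition lex_less :: "nat \<Rightarrow> (var \<Rightarrow>\<^sub>0 nat) \<Rightarrow> (var \<Rightarrow>\<^sub>0 nat) \<Rightarrow> bool" where
  "lex_less m \<alpha> \<beta> \<longleftrightarrow> (\<exists>v\<in>vars m. Poly_Mapping.lookup \<alpha> v < Poly_Mapping.lookup \<beta> v \<and>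
       (\<forall>u\<in>vars m. rank m v < rank m u \<longrightarrow> Poly_Mapping.lookup \<alpha> u = Poly_Mapping.lookup \<beta> u))"

definition lead_exp :: "nat \<Rightarrow> 'k::field mpoly \<Rightarrow> (var \<Rightarrow>\<^sub>0 nat)" where
  "lead_exp m p = (THE \<alpha>. \<alpha> \<in> Poly_Mapping.keys p \<and> (\<forall>\<beta>\<in>Poly_Mapping.keys p. \<beta> \<noteq> \<alpha> \<longrightarrow> lex_less m \<beta> \<alpha>))"

definition initial_ideal :: "nat \<Rightarrow> 'k::field mpoly set \<Rightarrow> 'k mpoly set" where
  "initial_ideal m J = ideal_gen m {mono (lead_exp m p) | p. p \<in> J \<and> p \<noteq> 0}"

definition max_ideal :: "nat \<Rightarrow> 'k::field mpoly set" where
  "max_ideal m = {p \<in> Sring m. Poly_Mapping.lookup p 0 = 0}"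

definition regular_seq :: "nat \<Rightarrow> 'k::field mpoly set \<Rightarrow> 'k mpoly list \<Rightarrow> bool" where
  "regular_seq m J fs \<longleftrightarrow>
     set fs \<subseteq> max_ideal m \<and>
     (\<forall>k < length fs. \<forall>g\<in>Sring m.
        fs ! k * g \<in> ideal_gen m (J \<union> set (take k fs)) \<longrightarrow> g \<in> ideal_gen m (J \<union> set (take k fs))) \<and>
     ideal_gen m (J \<union> set fs) \<noteq> Sring m"

definition depth_quot :: "nat \<Rightarrow> 'k::field mpoly set \<Rightarrow> enat" where
  "depth_quot m J = Sup {enat (length fs) | fs. regular_seq m J fs}"

end

theory Submission
  imports Defs
begin

lemma lookup_mono: "Poly_Mapping.lookup (mono a :: 'k::field mpoly) x = (if x = a then 1 else 0)"
  by (simp add: mono_def lookup_single when_def eq_commute)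

lemma keys_mono [simp]: "Poly_Mapping.keys (mono a :: 'k::field mpoly) = {a}"
  by (simp add: mono_def)

lemma mono_mult: "mono a * mono b = (mono (a + b) :: 'k::field mpoly)"
  by (simp add: mono_def mult_single)

lemma poly_expand:
  "p = (\<Sum>\<rho>\<in>Poly_Mapping.keys p. Poly_Mapping.single \<rho> (Poly_Mapping.lookup p \<rho>))"
proof (rule poly_mapping_eqI)
  fix x
  show "Poly_Mapping.lookup p x = Poly_Mapping.lookup (\<Sum>\<rho>\<in>Poly_Mapping.keys p. Poly_Mapping.single \<rho> (Poly_Mapping.lookup p \<rho>)) x"
    by (simp add: lookup_sum lookup_single when_def in_keys_iff)
qed

definition Lf :: "((var \<Rightarrow>\<^sub>0 nat) \<Rightarrow> 'c) \<Rightarrow> 'c \<Rightarrow> 'k::field mpoly \<Rightarrow> 'k" where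
  "Lf \<Phi> c h = (\<Sum>\<rho>\<in>Poly_Mapping.keys h. if \<Phi> \<rho> = c then Poly_Mapping.lookup h \<rho> else 0)"

lemma Lf_superset:
  assumes "finite A" "Poly_Mapping.keys h \<subseteq> A"
  shows "Lf \<Phi> c h = (\<Sum>\<rho>\<in>A. if \<Phi> \<rho> = c then Poly_Mapping.lookup h \<rho> else 0)"
  unfolding Lf_def
  by (rule sum.mono_neutral_left) (use assms in \<open>auto simp: in_keys_iff\<close>)

lemma Lf_add: "Lf \<Phi> c (p + q) = Lf \<Phi> c p + Lf \<Phi> c q"
proof -
  let ?A = "Poly_Mapping.keys p \<union> Poly_Mapping.keys q"
  have f: "finite ?A" by simp
  have k: "Poly_Mapping.keys (p + q) \<subseteq> ?A" by (rule keys_add)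
  show ?thesis
    by (simp add: Lf_superset[OF f k] Lf_superset[OF f] lookup_add sum.distrib[symmetric]
        if_distrib[where f="\<lambda>x. x + _"] ) (rule sum.cong; auto simp: lookup_add)
qed

lemma Lf_zero [simp]: "Lf \<Phi> c 0 = 0"
  by (simp add: Lf_def)

lemma Lf_uminus: "Lf \<Phi> c (- p) = - Lf \<Phi> c p"
  unfolding Lf_def keys_minus sum_negf[symmetric] by (rule sum.cong) auto

lemma Lf_diff: "Lf \<Phi> c (p - q) = Lf \<Phi> c p - Lf \<Phi> c q"
  using Lf_add[of \<Phi> c p "- q"] Lf_uminus[of \<Phi> c q] by simp

lemma Lf_sum: "Lf \<Phi> c (\<Sum>i\<in>I. f i) = (\<Sum>i\<in>I. Lf \<Phi> c (f i))"
  by (induction I rule: infinite_finite_induct) (auto simp: Lf_add)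

lemma Lf_single: "Lf \<Phi> c (Poly_Mapping.single \<rho> r) = (if \<Phi> \<rho> = c then r else 0)"
  by (auto simp: Lf_def)

lemma Lf_mul_mono:
  "Lf \<Phi> c (p * mono u) = (\<Sum>\<rho>\<in>Poly_Mapping.keys p. if \<Phi> (\<rho> + u) = c then Poly_Mapping.lookup p \<rho> else 0)"
proof -
  have "p * mono u = (\<Sum>\<rho>\<in>Poly_Mapping.keys p. Poly_Mapping.single \<rho> (Poly_Mapping.lookup p \<rho>)) * mono u"
    by (subst poly_expand[of p]) simp
  also have "\<dots> = (\<Sum>\<rho>\<in>Poly_Mapping.keys p. Poly_Mapping.single (\<rho> + u) (Poly_Mapping.lookup p \<rho>))"
    by (simp add: sum_distrib_right mono_def mult_single)
  finally show ?thesis by (simp add: Lf_sum Lf_single)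
qed

lemma SringI: "(\<And>\<alpha>. \<alpha> \<in> Poly_Mapping.keys p \<Longrightarrow> Poly_Mapping.keys \<alpha> \<subseteq> vars m) \<Longrightarrow> p \<in> Sring m"
  by (auto simp: Sring_def)

lemma SringD: "p \<in> Sring m \<Longrightarrow> \<alpha> \<in> Poly_Mapping.keys p \<Longrightarrow> Poly_Mapping.keys \<alpha> \<subseteq> vars m"
  by (auto simp: Sring_def)

lemma keys_add_nat: "Poly_Mapping.keys ((\<alpha>::var \<Rightarrow>\<^sub>0 nat) + \<beta>) = Poly_Mapping.keys \<alpha> \<union> Poly_Mapping.keys \<beta>"
  by (auto simp: in_keys_iff lookup_add)

lemma Sring_mult: "p \<in> Sring m \<Longrightarrow> q \<in> Sring m \<Longrightarrow> p * q \<in> Sring m"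
proof (rule SringI)
  fix \<gamma> assume p: "p \<in> Sring m" and q: "q \<in> Sring m" and "\<gamma> \<in> Poly_Mapping.keys (p * q)"
  then obtain \<alpha> \<beta> where "\<gamma> = \<alpha> + \<beta>" "\<alpha> \<in> Poly_Mapping.keys p" "\<beta> \<in> Poly_Mapping.keys q"
    using keys_mult by blast
  then show "Poly_Mapping.keys \<gamma> \<subseteq> vars m"
    using SringD[OF p] SringD[OF q] by (auto simp: keys_add_nat)
qed

lemma Sring_add: "p \<in> Sring m \<Longrightarrow> q \<in> Sring m \<Longrightarrow> p + q \<in> Sring m"
  apply (rule SringI)
  apply (drule set_mp[OF keys_add])
  apply (auto dest: SringD)
  done

lemma Sring_uminus: "p \<in> Sring m \<Longrightarrow> - p \<in> Sring m"
  by (auto simp: Sring_def keys_minus)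

lemma Sring_diff: "p \<in> Sring m \<Longrightarrow> q \<in> Sring m \<Longrightarrow> p - q \<in> Sring m"
  using Sring_add[OF _ Sring_uminus] by (metis diff_conv_add_uminus)

lemma Sring_zero [simp]: "0 \<in> Sring m"
  by (auto simp: Sring_def)

lemma Sring_single: "Poly_Mapping.keys \<alpha> \<subseteq> vars m \<Longrightarrow> Poly_Mapping.single \<alpha> r \<in> Sring m"
  by (auto simp: Sring_def)

lemma Sring_mono: "Poly_Mapping.keys \<alpha> \<subseteq> vars m \<Longrightarrow> mono \<alpha> \<in> Sring m"
  by (auto simp: Sring_def mono_def)

lemma Sring_one [simp]: "1 \<in> Sring m"
  using Sring_single[of 0 m 1] by simp

lemma Sring_sum: "(\<And>i. i \<in> I \<Longrightarrow> f i \<in> Sring m) \<Longrightarrow> sum f I \<in> Sring m"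
  by (induction I rule: infinite_finite_induct) (auto intro: Sring_add)

lemma ideal_gen_zero [simp]: "0 \<in> ideal_gen m G"
  unfolding ideal_gen_def by (rule CollectI, rule exI[of _ "{}"]) auto

lemma ideal_gen_gen: "g \<in> G \<Longrightarrow> g \<in> ideal_gen m G"
  unfolding ideal_gen_def
  by (rule CollectI, rule exI[of _ "{g}"], rule exI[of _ "\<lambda>_. 1"]) auto

lemma ideal_gen_add:
  assumes "x \<in> ideal_gen m G" "y \<in> ideal_gen m G"
  shows "x + y \<in> ideal_gen m G"
proof -
  obtain F1 c1 where 1: "finite F1" "F1 \<subseteq> G" "\<forall>g\<in>F1. c1 g \<in> Sring m" "x = (\<Sum>g\<in>F1. c1 g * g)"
    using assms(1) unfolding ideal_gen_def by blast
  obtain F2 c2 where 2: "finite F2" "F2 \<subseteq> G" "\<forall>g\<in>F2. c2 g \<in> Sring m" "y = (\<Sum>g\<in>F2. c2 g * g)"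
    using assms(2) unfolding ideal_gen_def by blast
  define d1 where "d1 g = (if g \<in> F1 then c1 g else 0)" for g
  define d2 where "d2 g = (if g \<in> F2 then c2 g else 0)" for g
  have fin: "finite (F1 \<union> F2)" using 1 2 by simp
  have e1: "(\<Sum>g\<in>F1 \<union> F2. d1 g * g) = (\<Sum>g\<in>F1. d1 g * g)"
    by (rule sum.mono_neutral_right[OF fin]) (auto simp: d1_def)
  have e1': "(\<Sum>g\<in>F1. d1 g * g) = x"
    unfolding 1(4) by (rule sum.cong) (auto simp: d1_def)
  have e2: "(\<Sum>g\<in>F1 \<union> F2. d2 g * g) = (\<Sum>g\<in>F2. d2 g * g)"
    by (rule sum.mono_neutral_right[OF fin]) (auto simp: d2_def)
  have e2': "(\<Sum>g\<in>F2. d2 g * g) = y"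
    unfolding 2(4) by (rule sum.cong) (auto simp: d2_def)
  have "x + y = (\<Sum>g\<in>F1 \<union> F2. (d1 g + d2 g) * g)"
    by (simp only: distrib_right sum.distrib e1 e1' e2 e2')
  moreover have "\<forall>g\<in>F1 \<union> F2. d1 g + d2 g \<in> Sring m"
  proof
    fix g assume "g \<in> F1 \<union> F2"
    have "d1 g \<in> Sring m" using 1(3) by (simp add: d1_def)
    moreover have "d2 g \<in> Sring m" using 2(3) by (simp add: d2_def)
    ultimately show "d1 g + d2 g \<in> Sring m" by (rule Sring_add)
  qed
  moreover have "F1 \<union> F2 \<subseteq> G" using 1(2) 2(2) by blast
  ultimately show ?thesis
    unfolding ideal_gen_def
    by (intro CollectI exI[of _ "F1 \<union> F2"] exI[of _ "\<lambda>g. d1 g + d2 g"] conjI fin)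
qed

lemma ideal_gen_mult:
  assumes "c \<in> Sring m" "x \<in> ideal_gen m G"
  shows "c * x \<in> ideal_gen m G"
proof -
  obtain F d where 1: "finite F" "F \<subseteq> G" "\<forall>g\<in>F. d g \<in> Sring m" "x = (\<Sum>g\<in>F. d g * g)"
    using assms(2) unfolding ideal_gen_def by blast
  have "c * x = (\<Sum>g\<in>F. (c * d g) * g)"
    by (simp add: 1(4) sum_distrib_left mult.assoc)
  moreover have "\<forall>g\<in>F. c * d g \<in> Sring m" using 1(3) assms(1) by (auto intro: Sring_mult)
  ultimately show ?thesis unfolding ideal_gen_def
    by (intro CollectI exI[of _ F] exI[of _ "\<lambda>g. c * d g"] conjI 1(1) 1(2))
qed

lemma ideal_gen_uminus: "x \<in> ideal_gen m G \<Longrightarrow> - x \<in> ideal_gen m G"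
  using ideal_gen_mult[OF Sring_uminus[OF Sring_one]] by fastforce

lemma ideal_gen_diff: "x \<in> ideal_gen m G \<Longrightarrow> y \<in> ideal_gen m G \<Longrightarrow> x - y \<in> ideal_gen m G"
  by (metis diff_conv_add_uminus ideal_gen_add ideal_gen_uminus)

lemma ideal_gen_sum: "(\<And>i. i \<in> I \<Longrightarrow> f i \<in> ideal_gen m G) \<Longrightarrow> sum f I \<in> ideal_gen m G"
  by (induction I rule: infinite_finite_induct) (auto intro: ideal_gen_add)

lemma ideal_gen_mono: "G \<subseteq> G' \<Longrightarrow> ideal_gen m G \<subseteq> ideal_gen m G'"
  unfolding ideal_gen_def by blast

lemma ideal_gen_subset:
  assumes "G \<subseteq> ideal_gen m G'"
  shows "ideal_gen m G \<subseteq> ideal_gen m G'"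
proof
  fix x assume "x \<in> ideal_gen m G"
  then obtain F d where 1: "finite F" "F \<subseteq> G" "\<forall>g\<in>F. d g \<in> Sring m" "x = (\<Sum>g\<in>F. d g * g)"
    unfolding ideal_gen_def by blast
  show "x \<in> ideal_gen m G'"
    unfolding 1(4) using 1 assms by (auto intro!: ideal_gen_sum ideal_gen_mult)
qed

lemma ideal_gen_absorb:
  "ideal_gen m (ideal_gen m A \<union> B) = ideal_gen m (A \<union> B)"
proof
  show "ideal_gen m (ideal_gen m A \<union> B) \<subseteq> ideal_gen m (A \<union> B)"
  proof (rule ideal_gen_subset)
    have "ideal_gen m A \<subseteq> ideal_gen m (A \<union> B)" by (rule ideal_gen_mono) blast
    moreover have "B \<subseteq> ideal_gen m (A \<union> B)" using ideal_gen_gen[of _ "A \<union> B" m] by blast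
    ultimately show "ideal_gen m A \<union> B \<subseteq> ideal_gen m (A \<union> B)" by blast
  qed
  show "ideal_gen m (A \<union> B) \<subseteq> ideal_gen m (ideal_gen m A \<union> B)"
  proof (rule ideal_gen_mono)
    show "A \<union> B \<subseteq> ideal_gen m A \<union> B" using ideal_gen_gen[of _ A m] by blast
  qed
qed

section \<open>Linear functional vanishing on ideals\<close>

lemma Lf_ideal:
  assumes G: "\<forall>x\<in>G. (\<exists>g. x = mono g \<and> (\<forall>\<nu>. Poly_Mapping.keys \<nu> \<subseteq> vars m \<longrightarrow> \<Phi> (\<nu> + g) \<noteq> c))
       \<or> (\<exists>u v. x = mono u - mono v \<and> (\<forall>\<nu>. Poly_Mapping.keys \<nu> \<subseteq> vars m \<longrightarrow> \<Phi> (\<nu> + u) = \<Phi> (\<nu> + v)))"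
    and h: "h \<in> ideal_gen m G"
  shows "Lf \<Phi> c (h :: 'k::field mpoly) = 0"
proof -
  obtain F d where 1: "finite F" "F \<subseteq> G" "\<forall>g\<in>F. d g \<in> Sring m" "h = (\<Sum>g\<in>F. d g * g)"
    using h unfolding ideal_gen_def by blast
  have "Lf \<Phi> c (d x * x) = 0" if "x \<in> F" for x
  proof -
    have dS: "d x \<in> Sring m" using 1 that by auto
    from G 1(2) that consider (mon) g where "x = mono g" "\<forall>\<nu>. Poly_Mapping.keys \<nu> \<subseteq> vars m \<longrightarrow> \<Phi> (\<nu> + g) \<noteq> c"
      | (bin) u v where "x = mono u - mono v" "\<forall>\<nu>. Poly_Mapping.keys \<nu> \<subseteq> vars m \<longrightarrow> \<Phi> (\<nu> + u) = \<Phi> (\<nu> + v)"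
      by blast
    then show ?thesis
    proof cases
      case mon
      then show ?thesis using SringD[OF dS] by (simp add: Lf_mul_mono)
    next
      case bin
      have "Lf \<Phi> c (d x * mono u) = Lf \<Phi> c (d x * mono v)"
        unfolding Lf_mul_mono using SringD[OF dS] bin(2) by (intro sum.cong) auto
      then show ?thesis using bin(1) by (simp add: right_diff_distrib Lf_diff)
    qed
  qed
  then show ?thesis unfolding 1(4) Lf_sum by simp
qed

section \<open>Variables and the lex order\<close>

lemma T_in_vars [simp]: "T i \<in> vars m \<longleftrightarrow> 1 \<le> i \<and> i \<le> m"
  by (auto simp: vars_def)

lemma X_in_vars [simp]: "X i \<in> vars m \<longleftrightarrow> 1 \<le> i \<and> i \<le> m + 1"
  by (auto simp: vars_def)

lemma finite_vars [simp]: "finite (vars m)"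
proof -
  have "vars m \<subseteq> T ` {1..m} \<union> X ` {1..m+1}" by (auto simp: vars_def)
  then show ?thesis by (rule finite_subset) simp
qed

lemma rank_inj: "u \<in> vars m \<Longrightarrow> v \<in> vars m \<Longrightarrow> rank m u = rank m v \<Longrightarrow> u = v"
  by (cases u; cases v) auto

lemma lex_irrefl: "\<not> lex_less m \<alpha> \<alpha>"
  by (auto simp: lex_less_def)

lemma lex_trans:
  assumes "lex_less m \<alpha> \<beta>" "lex_less m \<beta> \<gamma>"
  shows "lex_less m \<alpha> \<gamma>"
proof -
  obtain v1 where v1: "v1 \<in> vars m" "Poly_Mapping.lookup \<alpha> v1 < Poly_Mapping.lookup \<beta> v1"
    "\<forall>u\<in>vars m. rank m v1 < rank m u \<longrightarrow> Poly_Mapping.lookup \<alpha> u = Poly_Mapping.lookup \<beta> u"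
    using assms(1) unfolding lex_less_def by blast
  obtain v2 where v2: "v2 \<in> vars m" "Poly_Mapping.lookup \<beta> v2 < Poly_Mapping.lookup \<gamma> v2"
    "\<forall>u\<in>vars m. rank m v2 < rank m u \<longrightarrow> Poly_Mapping.lookup \<beta> u = Poly_Mapping.lookup \<gamma> u"
    using assms(2) unfolding lex_less_def by blast
  consider "rank m v1 = rank m v2" | "rank m v1 < rank m v2" | "rank m v2 < rank m v1" by linarith
  then show ?thesis
  proof cases
    case 1
    then have e: "v1 = v2" using rank_inj v1(1) v2(1) by blast
    show ?thesis unfolding lex_less_def
      apply (rule bexI[of _ v1])
      using v1 v2 e by auto
  next
    case 2
    show ?thesis unfolding lex_less_def
      apply (rule bexI[of _ v2])
      using v1 v2 2 by (auto dest: less_trans)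
  next
    case 3
    show ?thesis unfolding lex_less_def
      apply (rule bexI[of _ v1])
      using v1 v2 3 by (auto dest: less_trans)
  qed
qed

lemma lex_asym: "lex_less m \<alpha> \<beta> \<Longrightarrow> \<not> lex_less m \<beta> \<alpha>"
  using lex_trans lex_irrefl by blast

lemma lex_total:
  assumes "Poly_Mapping.keys \<alpha> \<subseteq> vars m" "Poly_Mapping.keys \<beta> \<subseteq> vars m" "\<alpha> \<noteq> \<beta>"
  shows "lex_less m \<alpha> \<beta> \<or> lex_less m \<beta> \<alpha>"
proof -
  define D where "D = {v\<in>vars m. Poly_Mapping.lookup \<alpha> v \<noteq> Poly_Mapping.lookup \<beta> v}"
  have finD: "finite D" unfolding D_def by simp
  have "D \<noteq> {}"
  proof
    assume "D = {}"
    have "Poly_Mapping.lookup \<alpha> v = Poly_Mapping.lookup \<beta> v" for v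
    proof (cases "v \<in> vars m")
      case True then show ?thesis using \<open>D = {}\<close> unfolding D_def by blast
    next
      case False
      then have "v \<notin> Poly_Mapping.keys \<alpha>" "v \<notin> Poly_Mapping.keys \<beta>" using assms(1,2) by blast+
      then show ?thesis by (simp add: in_keys_iff)
    qed
    then show False using assms(3) by (simp add: poly_mapping_eqI)
  qed
  then obtain v where v: "v \<in> D" "rank m v = Max (rank m ` D)"
    using Max_in[of "rank m ` D"] finD by (metis (no_types, lifting) empty_is_image finite_imageI imageE)
  have top: "\<forall>u\<in>vars m. rank m v < rank m u \<longrightarrow> Poly_Mapping.lookup \<alpha> u = Poly_Mapping.lookup \<beta> u"
  proof (intro ballI impI)
    fix u assume u: "u \<in> vars m" "rank m v < rank m u"
    show "Poly_Mapping.lookup \<alpha> u = Poly_Mapping.lookup \<beta> u"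
    proof (rule ccontr)
      assume "Poly_Mapping.lookup \<alpha> u \<noteq> Poly_Mapping.lookup \<beta> u"
      then have "u \<in> D" using u unfolding D_def by simp
      then have "rank m u \<le> rank m v" using v(2) finD by simp
      then show False using u by simp
    qed
  qed
  have "v \<in> vars m" "Poly_Mapping.lookup \<alpha> v \<noteq> Poly_Mapping.lookup \<beta> v" using v(1) unfolding D_def by auto
  then show ?thesis unfolding lex_less_def using top
    by (metis linorder_neqE_nat)
qed

lemma lex_max:
  assumes "finite A" "A \<noteq> {}" "\<forall>\<alpha>\<in>A. Poly_Mapping.keys \<alpha> \<subseteq> vars m"
  shows "\<exists>\<mu>\<in>A. \<forall>\<beta>\<in>A. \<beta> \<noteq> \<mu> \<longrightarrow> lex_less m \<beta> \<mu>"
  using assms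
proof (induction A rule: finite_ne_induct)
  case (singleton x)
  then show ?case by auto
next
  case (insert x F)
  then obtain \<mu> where \<mu>: "\<mu> \<in> F" "\<forall>\<beta>\<in>F. \<beta> \<noteq> \<mu> \<longrightarrow> lex_less m \<beta> \<mu>" by auto
  have "x \<noteq> \<mu>" using insert \<mu> by auto
  then have "lex_less m x \<mu> \<or> lex_less m \<mu> x" using lex_total insert.prems \<mu>(1) by auto
  then show ?case
  proof
    assume "lex_less m x \<mu>" then show ?thesis using \<mu> by auto
  next
    assume "lex_less m \<mu> x" then show ?thesis using \<mu> lex_trans by (intro bexI[of _ x]) auto
  qed
qed

lemma lead_exp_eq:
  assumes "\<mu> \<in> Poly_Mapping.keys p" "\<forall>\<beta>\<in>Poly_Mapping.keys p. \<beta> \<noteq> \<mu> \<longrightarrow> lex_less m \<beta> \<mu>"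
  shows "lead_exp m p = \<mu>"
  unfolding lead_exp_def
proof (rule the_equality)
  show "\<mu> \<in> Poly_Mapping.keys p \<and> (\<forall>\<beta>\<in>Poly_Mapping.keys p. \<beta> \<noteq> \<mu> \<longrightarrow> lex_less m \<beta> \<mu>)" using assms by (rule conjI)
next
  fix \<alpha> assume "\<alpha> \<in> Poly_Mapping.keys p \<and> (\<forall>\<beta>\<in>Poly_Mapping.keys p. \<beta> \<noteq> \<alpha> \<longrightarrow> lex_less m \<beta> \<alpha>)"
  then have a1: "\<alpha> \<in> Poly_Mapping.keys p" and a2: "\<forall>\<beta>\<in>Poly_Mapping.keys p. \<beta> \<noteq> \<alpha> \<longrightarrow> lex_less m \<beta> \<alpha>" by auto
  show "\<alpha> = \<mu>"
  proof (rule ccontr)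
    assume ne: "\<alpha> \<noteq> \<mu>"
    have "lex_less m \<mu> \<alpha>" using a2 assms(1) ne by auto
    moreover have "lex_less m \<alpha> \<mu>" using assms(2) a1 ne by auto
    ultimately show False using lex_asym by blast
  qed
qed

lemma lead_exp_prop:
  assumes "p \<in> Sring m" "p \<noteq> 0"
  shows "lead_exp m p \<in> Poly_Mapping.keys p \<and> (\<forall>\<beta>\<in>Poly_Mapping.keys p. \<beta> \<noteq> lead_exp m p \<longrightarrow> lex_less m \<beta> (lead_exp m p))"
proof -
  obtain \<mu> where "\<mu> \<in> Poly_Mapping.keys p" "\<forall>\<beta>\<in>Poly_Mapping.keys p. \<beta> \<noteq> \<mu> \<longrightarrow> lex_less m \<beta> \<mu>"
    using lex_max[of "Poly_Mapping.keys p" m] assms SringD[OF assms(1)] by auto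
  then show ?thesis using lead_exp_eq by metis
qed

definition gX :: "(nat \<Rightarrow> nat) \<Rightarrow> nat \<Rightarrow> nat \<Rightarrow> (var \<Rightarrow>\<^sub>0 nat)" where
  "gX a j i = Poly_Mapping.single (T j) (a j) + Poly_Mapping.single (X i) 1"

definition gW :: "nat \<Rightarrow> (nat \<Rightarrow> nat) \<Rightarrow> (nat \<Rightarrow> nat) \<Rightarrow> nat \<Rightarrow> (var \<Rightarrow>\<^sub>0 nat)" where
  "gW m a b j = Poly_Mapping.single (T j) (a j - b j) + Poly_Mapping.single (X (m + 1)) 1"

definition rW :: "nat \<Rightarrow> (nat \<Rightarrow> nat) \<Rightarrow> nat \<Rightarrow> (var \<Rightarrow>\<^sub>0 nat)" where
  "rW m b j = (\<Sum>l\<in>{1..m} - {j}. Poly_Mapping.single (T l) (b l)) + Poly_Mapping.single (X j) 1"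

lemma lookup_gX: "Poly_Mapping.lookup (gX a j i) v = (if v = T j then a j else 0) + (if v = X i then 1 else 0)"
  by (simp add: gX_def lookup_add lookup_single when_def eq_commute)

lemma lookup_gW: "Poly_Mapping.lookup (gW m a b j) v = (if v = T j then a j - b j else 0) + (if v = X (m + 1) then 1 else 0)"
  by (simp add: gW_def lookup_add lookup_single when_def eq_commute)

lemma lookup_rW: "Poly_Mapping.lookup (rW m b j) v =
   (case v of T l \<Rightarrow> if 1 \<le> l \<and> l \<le> m \<and> l \<noteq> j then b l else 0 | X i \<Rightarrow> if i = j then 1 else 0)"
proof (cases v)
  case (T l)
  have "(\<Sum>x\<in>{1..m} - {j}. (b x when T x = T l)) = (if 1 \<le> l \<and> l \<le> m \<and> l \<noteq> j then b l else 0)"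
    by (simp add: when_def sum.delta)
  then show ?thesis using T by (simp add: rW_def lookup_add lookup_sum lookup_single)
next
  case (X i)
  then show ?thesis by (simp add: rW_def lookup_add lookup_sum lookup_single when_def)
qed

lemma lookup_varexp: "Poly_Mapping.lookup (varexp v) u = (if u = v then 1 else 0)"
  by (simp add: varexp_def lookup_single when_def eq_commute)

lemma lookup_psi: "Poly_Mapping.lookup (psi_exp m a b \<alpha>) v =
  (case v of T l \<Rightarrow> if 1 \<le> l \<and> l \<le> m then Poly_Mapping.lookup \<alpha> (T l) + a l * Poly_Mapping.lookup \<alpha> (X l)
        + b l * Poly_Mapping.lookup \<alpha> (X (m + 1)) else 0 | X _ \<Rightarrow> 0)"
proof (cases v)
  case (T l)
  then show ?thesis by (simp add: psi_exp_def lookup_sum lookup_single when_def sum.delta)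
next
  case (X i)
  then show ?thesis by (simp add: psi_exp_def lookup_sum lookup_single when_def)
qed

lemma lookup_gcd_exp: "Poly_Mapping.lookup (gcd_exp f g) v = min (Poly_Mapping.lookup f v) (Poly_Mapping.lookup g v)"
  by (simp add: gcd_exp.rep_eq)

lemma Pbin_XX:
  assumes "1 \<le> j" "j < i" "i \<le> m"
  shows "Pbin m a b (varexp (X i)) (varexp (X j)) = (mono (gX a j i) - mono (gX a i j) :: 'k::field mpoly)"
proof -
  let ?p = "psi_exp m a b (varexp (X i))" and ?q = "psi_exp m a b (varexp (X j))"
  let ?g = "gcd_exp ?p ?q"
  have 1: "?q - ?g + varexp (X i) = gX a j i"
    by (rule poly_mapping_eqI) (use assms in \<open>auto simp: lookup_add lookup_minus lookup_psi lookup_gcd_exp lookup_varexp lookup_gX split: var.split\<close>)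
  have 2: "?p - ?g + varexp (X j) = gX a i j"
    by (rule poly_mapping_eqI) (use assms in \<open>auto simp: lookup_add lookup_minus lookup_psi lookup_gcd_exp lookup_varexp lookup_gX split: var.split\<close>)
  show ?thesis unfolding Pbin_def Let_def mono_mult 1 2 ..
qed

lemma Pbin_WX:
  assumes "1 \<le> j" "j \<le> m" "b j \<le> a j"
  shows "Pbin m a b (varexp (X (m + 1))) (varexp (X j)) = (mono (gW m a b j) - mono (rW m b j) :: 'k::field mpoly)"
proof -
  let ?p = "psi_exp m a b (varexp (X (m + 1)))" and ?q = "psi_exp m a b (varexp (X j))"
  let ?g = "gcd_exp ?p ?q"
  have 1: "?q - ?g + varexp (X (m + 1)) = gW m a b j"
    by (rule poly_mapping_eqI) (use assms in \<open>auto simp: lookup_add lookup_minus lookup_psi lookup_gcd_exp lookup_varexp lookup_gW split: var.split\<close>)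
  have 2: "?p - ?g + varexp (X j) = rW m b j"
    by (rule poly_mapping_eqI) (use assms in \<open>auto simp: lookup_add lookup_minus lookup_psi lookup_gcd_exp lookup_varexp lookup_rW split: var.split\<close>)
  show ?thesis unfolding Pbin_def Let_def mono_mult 1 2 ..
qed

section \<open>Rewriting on monomials\<close>

definition Rules :: "nat \<Rightarrow> (nat \<Rightarrow> nat) \<Rightarrow> (nat \<Rightarrow> nat) \<Rightarrow> ((var \<Rightarrow>\<^sub>0 nat) \<times> (var \<Rightarrow>\<^sub>0 nat)) set" where
  "Rules m a b = {(gX a j i, gX a i j) | i j. 1 \<le> j \<and> j < i \<and> i \<le> m}
     \<union> {(gW m a b j, rW m b j) | j. 1 \<le> j \<and> j \<le> m}"

definition stp :: "nat \<Rightarrow> (nat \<Rightarrow> nat) \<Rightarrow> (nat \<Rightarrow> nat) \<Rightarrow> (var \<Rightarrow>\<^sub>0 nat) \<Rightarrow> (var \<Rightarrow>\<^sub>0 nat) \<Rightarrow> bool" where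
  "stp m a b \<alpha> \<beta> \<longleftrightarrow> (\<exists>\<nu> u v. (u, v) \<in> Rules m a b \<and> \<alpha> = \<nu> + u \<and> \<beta> = \<nu> + v)"

definition ple :: "(var \<Rightarrow>\<^sub>0 nat) \<Rightarrow> (var \<Rightarrow>\<^sub>0 nat) \<Rightarrow> bool" where
  "ple u \<alpha> \<longleftrightarrow> (\<forall>x. Poly_Mapping.lookup u x \<le> Poly_Mapping.lookup \<alpha> x)"

lemma ple_decomp: "ple u \<alpha> \<Longrightarrow> \<alpha> = (\<alpha> - u) + u"
  by (rule poly_mapping_eqI) (simp add: ple_def lookup_add lookup_minus)

lemma ple_add: "ple u (\<nu> + u)"
  by (simp add: ple_def lookup_add)

lemma stpI:
  assumes "(u, v) \<in> Rules m a b" "ple u \<beta>" "\<beta> - u + v = \<delta>"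
  shows "stp m a b \<beta> \<delta>"
  unfolding stp_def using assms ple_decomp[OF assms(2)] by blast

lemma stpE:
  assumes "stp m a b \<alpha> \<beta>"
  obtains u v where "(u, v) \<in> Rules m a b" "ple u \<alpha>" "\<beta> = \<alpha> - u + v"
proof -
  obtain \<nu> u v where "(u, v) \<in> Rules m a b" "\<alpha> = \<nu> + u" "\<beta> = \<nu> + v"
    using assms unfolding stp_def by blast
  then show ?thesis using that[of u v] ple_add[of u \<nu>] by simp
qed

definition joinable :: "nat \<Rightarrow> (nat \<Rightarrow> nat) \<Rightarrow> (nat \<Rightarrow> nat) \<Rightarrow> (var \<Rightarrow>\<^sub>0 nat) \<Rightarrow> (var \<Rightarrow>\<^sub>0 nat) \<Rightarrow> bool" where
  "joinable m a b \<beta>1 \<beta>2 \<longleftrightarrow> (\<exists>\<delta>. (\<beta>1 = \<delta> \<or> stp m a b \<beta>1 \<delta>) \<and> (\<beta>2 = \<delta> \<or> stp m a b \<beta>2 \<delta>))"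

lemma joinable_sym: "joinable m a b \<beta>1 \<beta>2 \<Longrightarrow> joinable m a b \<beta>2 \<beta>1"
  unfolding joinable_def by blast

lemma joinable_refl: "joinable m a b \<beta> \<beta>"
  unfolding joinable_def by blast

lemma joinable_stp: "stp m a b \<beta>1 \<beta>2 \<Longrightarrow> joinable m a b \<beta>1 \<beta>2"
  unfolding joinable_def by blast

lemma coprime_join:
  assumes r1: "(u1, v1) \<in> Rules m a b" and r2: "(u2, v2) \<in> Rules m a b"
    and p1: "ple u1 \<alpha>" and p2: "ple u2 \<alpha>"
    and cop: "\<forall>x. Poly_Mapping.lookup u1 x = 0 \<or> Poly_Mapping.lookup u2 x = 0"
  shows "joinable m a b (\<alpha> - u1 + v1) (\<alpha> - u2 + v2)"
proof -
  let ?\<delta> = "\<alpha> - u1 + v1 - u2 + v2"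
  have "stp m a b (\<alpha> - u1 + v1) ?\<delta>"
  proof (rule stpI[OF r2])
    show "ple u2 (\<alpha> - u1 + v1)" unfolding ple_def
    proof
      fix x show "Poly_Mapping.lookup u2 x \<le> Poly_Mapping.lookup (\<alpha> - u1 + v1) x"
        using p2[unfolded ple_def, rule_format, of x] cop[rule_format, of x] by (auto simp: lookup_add lookup_minus)
    qed
  qed simp
  moreover have "stp m a b (\<alpha> - u2 + v2) ?\<delta>"
  proof (rule stpI[OF r1])
    show "ple u1 (\<alpha> - u2 + v2)" unfolding ple_def
    proof
      fix x show "Poly_Mapping.lookup u1 x \<le> Poly_Mapping.lookup (\<alpha> - u2 + v2) x"
        using p1[unfolded ple_def, rule_format, of x] cop[rule_format, of x] by (auto simp: lookup_add lookup_minus)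
    qed
    show "\<alpha> - u2 + v2 - u1 + v1 = ?\<delta>"
    proof (rule poly_mapping_eqI)
      fix x show "Poly_Mapping.lookup (\<alpha> - u2 + v2 - u1 + v1) x = Poly_Mapping.lookup ?\<delta> x"
        using p1[unfolded ple_def, rule_format, of x] p2[unfolded ple_def, rule_format, of x] cop[rule_format, of x]
        by (auto simp: lookup_add lookup_minus)
    qed
  qed
  ultimately show ?thesis unfolding joinable_def by blast
qed

lemma RulesXI: "1 \<le> j \<Longrightarrow> j < i \<Longrightarrow> i \<le> m \<Longrightarrow> (gX a j i, gX a i j) \<in> Rules m a b"
  unfolding Rules_def by blast

lemma RulesWI: "1 \<le> j \<Longrightarrow> j \<le> m \<Longrightarrow> (gW m a b j, rW m b j) \<in> Rules m a b"
  unfolding Rules_def by blast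

lemma pleI: "(\<And>x. Poly_Mapping.lookup u x \<le> Poly_Mapping.lookup \<alpha> x) \<Longrightarrow> ple u \<alpha>"
  by (simp add: ple_def)

lemma pleD: "ple u \<alpha> \<Longrightarrow> Poly_Mapping.lookup u x \<le> Poly_Mapping.lookup \<alpha> x"
  by (simp add: ple_def)

lemma lookup_gX_T [simp]: "Poly_Mapping.lookup (gX a j i) (T l) = (if l = j then a j else 0)"
  by (simp add: lookup_gX)
lemma lookup_gX_X [simp]: "Poly_Mapping.lookup (gX a j i) (X n) = (if n = i then 1 else 0)"
  by (simp add: lookup_gX)
lemma lookup_gW_T [simp]: "Poly_Mapping.lookup (gW m a b j) (T l) = (if l = j then a j - b j else 0)"
  by (simp add: lookup_gW)
lemma lookup_gW_X [simp]: "Poly_Mapping.lookup (gW m a b j) (X n) = (if n = m + 1 then 1 else 0)"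
  by (simp add: lookup_gW)
lemma lookup_rW_T [simp]: "Poly_Mapping.lookup (rW m b j) (T l) = (if 1 \<le> l \<and> l \<le> m \<and> l \<noteq> j then b l else 0)"
  by (simp add: lookup_rW)
lemma lookup_rW_X [simp]: "Poly_Mapping.lookup (rW m b j) (X n) = (if n = j then 1 else 0)"
  by (simp add: lookup_rW)

lemma lc_XX_sameX:
  assumes "1 \<le> j1" "j1 < j2" "j2 < i" "i \<le> m"
    and p1: "ple (gX a j1 i) \<alpha>" and p2: "ple (gX a j2 i) \<alpha>"
  shows "stp m a b (\<alpha> - gX a j2 i + gX a i j2) (\<alpha> - gX a j1 i + gX a i j1)"
proof (rule stpI[OF RulesXI[of j1 j2 m a b]])
  show "ple (gX a j1 j2) (\<alpha> - gX a j2 i + gX a i j2)"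
  proof (rule pleI)
    fix x show "Poly_Mapping.lookup (gX a j1 j2) x \<le> Poly_Mapping.lookup (\<alpha> - gX a j2 i + gX a i j2) x"
      using pleD[OF p1, of x] pleD[OF p2, of x] assms(1-4) by (auto simp: lookup_add lookup_minus lookup_gX)
  qed
  show "\<alpha> - gX a j2 i + gX a i j2 - gX a j1 j2 + gX a j2 j1 = \<alpha> - gX a j1 i + gX a i j1"
  proof (rule poly_mapping_eqI)
    fix x show "Poly_Mapping.lookup (\<alpha> - gX a j2 i + gX a i j2 - gX a j1 j2 + gX a j2 j1) x = Poly_Mapping.lookup (\<alpha> - gX a j1 i + gX a i j1) x"
      using pleD[OF p1, of x] pleD[OF p2, of x] assms(1-4) by (auto simp: lookup_add lookup_minus lookup_gX)
  qed
qed (use assms in auto)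

lemma lc_XX_sameT:
  assumes "1 \<le> j" "j < i2" "i2 < i1" "i1 \<le> m"
    and p1: "ple (gX a j i1) \<alpha>" and p2: "ple (gX a j i2) \<alpha>"
  shows "stp m a b (\<alpha> - gX a j i2 + gX a i2 j) (\<alpha> - gX a j i1 + gX a i1 j)"
proof (rule stpI[OF RulesXI[of i2 i1 m a b]])
  show "ple (gX a i2 i1) (\<alpha> - gX a j i2 + gX a i2 j)"
  proof (rule pleI)
    fix x show "Poly_Mapping.lookup (gX a i2 i1) x \<le> Poly_Mapping.lookup (\<alpha> - gX a j i2 + gX a i2 j) x"
      using pleD[OF p1, of x] pleD[OF p2, of x] assms(1-4) by (auto simp: lookup_add lookup_minus lookup_gX)
  qed
  show "\<alpha> - gX a j i2 + gX a i2 j - gX a i2 i1 + gX a i1 i2 = \<alpha> - gX a j i1 + gX a i1 j"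
  proof (rule poly_mapping_eqI)
    fix x show "Poly_Mapping.lookup (\<alpha> - gX a j i2 + gX a i2 j - gX a i2 i1 + gX a i1 i2) x = Poly_Mapping.lookup (\<alpha> - gX a j i1 + gX a i1 j) x"
      using pleD[OF p1, of x] pleD[OF p2, of x] assms(1-4) by (auto simp: lookup_add lookup_minus lookup_gX)
  qed
qed (use assms in auto)

lemma lc_XW:
  assumes "1 \<le> j" "j < i" "i \<le> m" and ab: "\<forall>l\<in>{1..m}. b l \<le> a l"
    and p1: "ple (gX a j i) \<alpha>" and p2: "ple (gW m a b j) \<alpha>"
  shows "stp m a b (\<alpha> - gX a j i + gX a i j) (\<alpha> - gW m a b j + rW m b j)"
proof (rule stpI[OF RulesWI[of i m a b]])
  have abi: "b i \<le> a i" "b j \<le> a j" using ab assms(1-3) by auto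
  show "ple (gW m a b i) (\<alpha> - gX a j i + gX a i j)"
  proof (rule pleI)
    fix x show "Poly_Mapping.lookup (gW m a b i) x \<le> Poly_Mapping.lookup (\<alpha> - gX a j i + gX a i j) x"
      using pleD[OF p1, of x] pleD[OF p2, of x] assms(1-3) abi
      by (cases x) (auto simp: lookup_add lookup_minus)
  qed
  show "\<alpha> - gX a j i + gX a i j - gW m a b i + rW m b i = \<alpha> - gW m a b j + rW m b j"
  proof (rule poly_mapping_eqI)
    fix x 
    have q1: "Poly_Mapping.lookup (gX a j i) x \<le> Poly_Mapping.lookup \<alpha> x" using pleD[OF p1] .
    have q2: "Poly_Mapping.lookup (gW m a b j) x \<le> Poly_Mapping.lookup \<alpha> x" using pleD[OF p2] .
    show "Poly_Mapping.lookup (\<alpha> - gX a j i + gX a i j - gW m a b i + rW m b i) x = Poly_Mapping.lookup (\<alpha> - gW m a b j + rW m b j) x"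
    proof (cases x)
      case (T l)
      consider "l = i" | "l = j" | "l \<noteq> i" "l \<noteq> j" by blast
      then show ?thesis
      proof cases
        case 1 then show ?thesis using T q1 q2 assms(1-3) abi by (simp add: lookup_add lookup_minus)
      next
        case 2 then show ?thesis using T q1 q2 assms(1-3) abi by (simp add: lookup_add lookup_minus)
      next
        case 3 then show ?thesis using T q1 q2 assms(1-3) abi by (simp add: lookup_add lookup_minus)
      qed
    next
      case (X n)
      consider "n = i" | "n = j" | "n = m + 1" | "n \<noteq> i" "n \<noteq> j" "n \<noteq> m + 1" by blast
      then show ?thesis
      proof cases
        case 1 then show ?thesis using X q1 q2 assms(1-3) abi by (simp add: lookup_add lookup_minus)
      next
        case 2 then show ?thesis using X q1 q2 assms(1-3) abi by (simp add: lookup_add lookup_minus)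
      next
        case 3 then show ?thesis using X q1 q2 assms(1-3) abi by (simp add: lookup_add lookup_minus)
      next
        case 4 then show ?thesis using X q1 q2 assms(1-3) abi by (simp add: lookup_add lookup_minus)
      qed
    qed
  qed
qed (use assms in auto)

lemma lc_WW:
  assumes "1 \<le> j1" "j1 < j2" "j2 \<le> m" and ab: "\<forall>l\<in>{1..m}. b l \<le> a l"
    and p1: "ple (gW m a b j1) \<alpha>" and p2: "ple (gW m a b j2) \<alpha>"
  shows "stp m a b (\<alpha> - gW m a b j2 + rW m b j2) (\<alpha> - gW m a b j1 + rW m b j1)"
proof (rule stpI[OF RulesXI[of j1 j2 m a b]])
  have abi: "b j1 \<le> a j1" "b j2 \<le> a j2" using ab assms(1-3) by auto
  show "ple (gX a j1 j2) (\<alpha> - gW m a b j2 + rW m b j2)"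
  proof (rule pleI)
    fix x
    have q1: "Poly_Mapping.lookup (gW m a b j1) x \<le> Poly_Mapping.lookup \<alpha> x" using pleD[OF p1] .
    have q2: "Poly_Mapping.lookup (gW m a b j2) x \<le> Poly_Mapping.lookup \<alpha> x" using pleD[OF p2] .
    show "Poly_Mapping.lookup (gX a j1 j2) x \<le> Poly_Mapping.lookup (\<alpha> - gW m a b j2 + rW m b j2) x"
    proof (cases x)
      case (T l)
      consider "l = j1" | "l = j2" | "l \<noteq> j1" "l \<noteq> j2" by blast
      then show ?thesis
      proof cases
        case 1 then show ?thesis using T q1 q2 assms(1-3) abi by (simp add: lookup_add lookup_minus)
      next
        case 2 then show ?thesis using T q1 q2 assms(1-3) abi by (simp add: lookup_add lookup_minus)
      next
        case 3 then show ?thesis using T q1 q2 assms(1-3) abi by (simp add: lookup_add lookup_minus)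
      qed
    next
      case (X n)
      then show ?thesis using q1 q2 assms(1-3) abi by (simp add: lookup_add lookup_minus)
    qed
  qed
  show "\<alpha> - gW m a b j2 + rW m b j2 - gX a j1 j2 + gX a j2 j1 = \<alpha> - gW m a b j1 + rW m b j1"
  proof (rule poly_mapping_eqI)
    fix x 
    have q1: "Poly_Mapping.lookup (gW m a b j1) x \<le> Poly_Mapping.lookup \<alpha> x" using pleD[OF p1] .
    have q2: "Poly_Mapping.lookup (gW m a b j2) x \<le> Poly_Mapping.lookup \<alpha> x" using pleD[OF p2] .
    show "Poly_Mapping.lookup (\<alpha> - gW m a b j2 + rW m b j2 - gX a j1 j2 + gX a j2 j1) x = Poly_Mapping.lookup (\<alpha> - gW m a b j1 + rW m b j1) x"
    proof (cases x)
      case (T l)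
      consider "l = j1" | "l = j2" | "l \<noteq> j1" "l \<noteq> j2" by blast
      then show ?thesis
      proof cases
        case 1 then show ?thesis using T q1 q2 assms(1-3) abi by (simp add: lookup_add lookup_minus)
      next
        case 2 then show ?thesis using T q1 q2 assms(1-3) abi by (simp add: lookup_add lookup_minus)
      next
        case 3 then show ?thesis using T q1 q2 assms(1-3) abi by (simp add: lookup_add lookup_minus)
      qed
    next
      case (X n)
      consider "n = j1" | "n = j2" | "n = m + 1" | "n \<noteq> j1" "n \<noteq> j2" "n \<noteq> m + 1" by blast
      then show ?thesis
      proof cases
        case 1 then show ?thesis using X q1 q2 assms(1-3) abi by (simp add: lookup_add lookup_minus)
      next
        case 2 then show ?thesis using X q1 q2 assms(1-3) abi by (simp add: lookup_add lookup_minus)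
      next
        case 3 then show ?thesis using X q1 q2 assms(1-3) abi by (simp add: lookup_add lookup_minus)
      next
        case 4 then show ?thesis using X q1 q2 assms(1-3) abi by (simp add: lookup_add lookup_minus)
      qed
    qed
  qed
qed (use assms in auto)

lemma RulesE:
  assumes "(u, v) \<in> Rules m a b"
  obtains (XX) i j where "1 \<le> j" "j < i" "i \<le> m" "u = gX a j i" "v = gX a i j"
    | (WX) j where "1 \<le> j" "j \<le> m" "u = gW m a b j" "v = rW m b j"
  using assms unfolding Rules_def by blast

lemma local_confl:
  assumes ab: "\<forall>l\<in>{1..m}. b l \<le> a l"
    and s1: "stp m a b \<alpha> \<beta>1" and s2: "stp m a b \<alpha> \<beta>2"
  shows "joinable m a b \<beta>1 \<beta>2"
proof -
  obtain u1 v1 where r1: "(u1, v1) \<in> Rules m a b" and p1: "ple u1 \<alpha>" and b1: "\<beta>1 = \<alpha> - u1 + v1"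
    using s1 by (rule stpE)
  obtain u2 v2 where r2: "(u2, v2) \<in> Rules m a b" and p2: "ple u2 \<alpha>" and b2: "\<beta>2 = \<alpha> - u2 + v2"
    using s2 by (rule stpE)
  from r1 show ?thesis
  proof (cases rule: RulesE)
    case (XX i1 j1)
    note c1 = this
    from r2 show ?thesis
    proof (cases rule: RulesE)
      case (XX i2 j2)
      note c2 = this
      consider "i1 = i2" "j1 = j2" | "i1 = i2" "j1 < j2" | "i1 = i2" "j2 < j1"
        | "j1 = j2" "i2 < i1" | "j1 = j2" "i1 < i2" | "i1 \<noteq> i2" "j1 \<noteq> j2" by linarith
      then show ?thesis
      proof cases
        case 1 then show ?thesis using b1 b2 c1 c2 joinable_refl by simp
      next
        case 2 then show ?thesis using b1 b2 c1 c2 p1 p2 lc_XX_sameX[of j1 j2 i1 m a \<alpha> b]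
          by (metis joinable_stp joinable_sym)
      next
        case 3 then show ?thesis using b1 b2 c1 c2 p1 p2 lc_XX_sameX[of j2 j1 i1 m a \<alpha> b]
          by (metis joinable_stp)
      next
        case 4 then show ?thesis using b1 b2 c1 c2 p1 p2 lc_XX_sameT[of j1 i2 i1 m a \<alpha> b]
          by (metis joinable_stp joinable_sym)
      next
        case 5 then show ?thesis using b1 b2 c1 c2 p1 p2 lc_XX_sameT[of j1 i1 i2 m a \<alpha> b]
          by (metis joinable_stp)
      next
        case 6
        have "\<forall>x. Poly_Mapping.lookup u1 x = 0 \<or> Poly_Mapping.lookup u2 x = 0"
        proof
          fix x show "Poly_Mapping.lookup u1 x = 0 \<or> Poly_Mapping.lookup u2 x = 0"
            using 6 c1 c2 by (cases x) auto
        qed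
        then show ?thesis using coprime_join[OF r1 r2 p1 p2] b1 b2 by simp
      qed
    next
      case (WX k)
      note c2 = this
      show ?thesis
      proof (cases "j1 = k")
        case True then show ?thesis using b1 b2 c1 c2 p1 p2 ab lc_XW[of j1 i1 m b a \<alpha>]
          by (metis joinable_stp)
      next
        case False
        have "\<forall>x. Poly_Mapping.lookup u1 x = 0 \<or> Poly_Mapping.lookup u2 x = 0"
        proof
          fix x show "Poly_Mapping.lookup u1 x = 0 \<or> Poly_Mapping.lookup u2 x = 0"
            using False c1 c2 by (cases x) auto
        qed
        then show ?thesis using coprime_join[OF r1 r2 p1 p2] b1 b2 by simp
      qed
    qed
  next
    case (WX j1)
    note c1 = this
    from r2 show ?thesis
    proof (cases rule: RulesE)
      case (XX i2 k)
      note c2 = this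
      show ?thesis
      proof (cases "k = j1")
        case True then show ?thesis using b1 b2 c1 c2 p1 p2 ab lc_XW[of k i2 m b a \<alpha>]
          by (metis joinable_stp joinable_sym)
      next
        case False
        have "\<forall>x. Poly_Mapping.lookup u1 x = 0 \<or> Poly_Mapping.lookup u2 x = 0"
        proof
          fix x show "Poly_Mapping.lookup u1 x = 0 \<or> Poly_Mapping.lookup u2 x = 0"
            using False c1 c2 by (cases x) auto
        qed
        then show ?thesis using coprime_join[OF r1 r2 p1 p2] b1 b2 by simp
      qed
    next
      case (WX j2)
      note c2 = this
      consider "j1 = j2" | "j1 < j2" | "j2 < j1" by linarith
      then show ?thesis
      proof cases
        case 1 then show ?thesis using b1 b2 c1 c2 joinable_refl by simp
      next
        case 2 then show ?thesis using b1 b2 c1 c2 p1 p2 ab lc_WW[of j1 j2 m b a \<alpha>]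
          by (metis joinable_stp joinable_sym)
      next
        case 3 then show ?thesis using b1 b2 c1 c2 p1 p2 ab lc_WW[of j2 j1 m b a \<alpha>]
          by (metis joinable_stp)
      qed
    qed
  qed
qed

definition wt :: "nat \<Rightarrow> (var \<Rightarrow>\<^sub>0 nat) \<Rightarrow> nat" where
  "wt m \<alpha> = (\<Sum>i\<in>{1..m+1}. i * Poly_Mapping.lookup \<alpha> (X i))"

lemma wt_add: "wt m (\<alpha> + \<beta>) = wt m \<alpha> + wt m \<beta>"
  by (simp add: wt_def lookup_add distrib_left sum.distrib)

lemma wt_gX: "1 \<le> i \<Longrightarrow> i \<le> m + 1 \<Longrightarrow> wt m (gX a j i) = i"
  by (simp add: wt_def if_distrib[of "\<lambda>x. _ * x"] sum.delta cong: if_cong)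

lemma wt_gW: "wt m (gW m a b j) = m + 1"
  by (simp add: wt_def if_distrib[of "\<lambda>x. _ * x"] sum.delta cong: if_cong)

lemma wt_rW: "1 \<le> j \<Longrightarrow> j \<le> m \<Longrightarrow> wt m (rW m b j) = j"
  by (simp add: wt_def if_distrib[of "\<lambda>x. _ * x"] sum.delta cong: if_cong)

lemma wt_rule: "(u, v) \<in> Rules m a b \<Longrightarrow> wt m v < wt m u"
  by (erule RulesE) (simp_all add: wt_gX wt_gW wt_rW)

lemma stp_wt: "stp m a b \<alpha> \<beta> \<Longrightarrow> wt m \<beta> < wt m \<alpha>"
  unfolding stp_def using wt_rule by (auto simp: wt_add)

lemma lex_less_add: "lex_less m v u \<Longrightarrow> lex_less m (\<nu> + v) (\<nu> + u)"
  unfolding lex_less_def by (auto simp: lookup_add)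

lemma lex_rule: "(u, v) \<in> Rules m a b \<Longrightarrow> lex_less m v u"
proof (erule RulesE)
  fix i j assume h: "1 \<le> j" "j < i" "i \<le> m" "u = gX a j i" "v = gX a i j"
  show "lex_less m v u" unfolding lex_less_def
  proof (rule bexI[of _ "X i"])
    show "X i \<in> vars m" using h by simp
    show "Poly_Mapping.lookup v (X i) < Poly_Mapping.lookup u (X i) \<and>
      (\<forall>w\<in>vars m. rank m (X i) < rank m w \<longrightarrow> Poly_Mapping.lookup v w = Poly_Mapping.lookup u w)"
    proof (intro conjI ballI impI)
      show "Poly_Mapping.lookup v (X i) < Poly_Mapping.lookup u (X i)" using h by simp
      fix w assume "w \<in> vars m" "rank m (X i) < rank m w"
      then show "Poly_Mapping.lookup v w = Poly_Mapping.lookup u w" using h by (cases w) auto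
    qed
  qed
next
  fix j assume h: "1 \<le> j" "j \<le> m" "u = gW m a b j" "v = rW m b j"
  show "lex_less m v u" unfolding lex_less_def
  proof (rule bexI[of _ "X (m + 1)"])
    show "X (m + 1) \<in> vars m" by simp
    show "Poly_Mapping.lookup v (X (m + 1)) < Poly_Mapping.lookup u (X (m + 1)) \<and>
      (\<forall>w\<in>vars m. rank m (X (m + 1)) < rank m w \<longrightarrow> Poly_Mapping.lookup v w = Poly_Mapping.lookup u w)"
    proof (intro conjI ballI impI)
      show "Poly_Mapping.lookup v (X (m + 1)) < Poly_Mapping.lookup u (X (m + 1))" using h by simp
      fix w assume "w \<in> vars m" "rank m (X (m + 1)) < rank m w"
      then show "Poly_Mapping.lookup v w = Poly_Mapping.lookup u w" using h by (cases w) auto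
    qed
  qed
qed

lemma stp_lex: "stp m a b \<alpha> \<beta> \<Longrightarrow> lex_less m \<beta> \<alpha>"
  unfolding stp_def using lex_rule lex_less_add by blast

lemma rtc_lex: "(stp m a b)\<^sup>*\<^sup>* \<alpha> \<beta> \<Longrightarrow> \<alpha> = \<beta> \<or> lex_less m \<beta> \<alpha>"
proof (induction rule: rtranclp_induct)
  case base then show ?case by simp
next
  case (step y z)
  then have "lex_less m z y" using stp_lex by blast
  then show ?case using step.IH lex_trans by blast
qed

definition irr :: "nat \<Rightarrow> (nat \<Rightarrow> nat) \<Rightarrow> (nat \<Rightarrow> nat) \<Rightarrow> (var \<Rightarrow>\<^sub>0 nat) \<Rightarrow> bool" where
  "irr m a b \<alpha> \<longleftrightarrow> \<not> (\<exists>\<beta>. stp m a b \<alpha> \<beta>)"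

lemma nf_exists: "\<exists>n. (stp m a b)\<^sup>*\<^sup>* \<alpha> n \<and> irr m a b n"
proof (induction "wt m \<alpha>" arbitrary: \<alpha> rule: less_induct)
  case less
  show ?case
  proof (cases "irr m a b \<alpha>")
    case True then show ?thesis by blast
  next
    case False
    then obtain \<beta> where s: "stp m a b \<alpha> \<beta>" unfolding irr_def by blast
    then obtain n where "(stp m a b)\<^sup>*\<^sup>* \<beta> n" "irr m a b n" using less stp_wt by blast
    then show ?thesis using s by (meson converse_rtranclp_into_rtranclp)
  qed
qed

lemma nf_unique:
  assumes ab: "\<forall>l\<in>{1..m}. b l \<le> a l"
  shows "(stp m a b)\<^sup>*\<^sup>* \<alpha> n1 \<Longrightarrow> irr m a b n1 \<Longrightarrow> (stp m a b)\<^sup>*\<^sup>* \<alpha> n2 \<Longrightarrow> irr m a b n2 \<Longrightarrow> n1 = n2"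
proof (induction "wt m \<alpha>" arbitrary: \<alpha> n1 n2 rule: less_induct)
  case less
  show ?case
  proof (cases "irr m a b \<alpha>")
    case True
    have "\<alpha> = n1" using less.prems(1) True unfolding irr_def by (metis converse_rtranclpE)
    moreover have "\<alpha> = n2" using less.prems(3) True unfolding irr_def by (metis converse_rtranclpE)
    ultimately show ?thesis by simp
  next
    case False
    obtain \<beta>1 where s1: "stp m a b \<alpha> \<beta>1" "(stp m a b)\<^sup>*\<^sup>* \<beta>1 n1"
      using less.prems(1,2) False unfolding irr_def by (metis converse_rtranclpE)
    obtain \<beta>2 where s2: "stp m a b \<alpha> \<beta>2" "(stp m a b)\<^sup>*\<^sup>* \<beta>2 n2"
      using less.prems(3,4) False unfolding irr_def by (metis converse_rtranclpE)
    obtain \<delta> where d: "\<beta>1 = \<delta> \<or> stp m a b \<beta>1 \<delta>" "\<beta>2 = \<delta> \<or> stp m a b \<beta>2 \<delta>"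
      using local_confl[OF ab s1(1) s2(1)] unfolding joinable_def by blast
    obtain n3 where n3: "(stp m a b)\<^sup>*\<^sup>* \<delta> n3" "irr m a b n3" using nf_exists by blast
    have r1: "(stp m a b)\<^sup>*\<^sup>* \<beta>1 n3" using d(1) n3(1) by (meson converse_rtranclp_into_rtranclp)
    have r2: "(stp m a b)\<^sup>*\<^sup>* \<beta>2 n3" using d(2) n3(1) by (meson converse_rtranclp_into_rtranclp)
    have "n1 = n3" using less.hyps[OF stp_wt[OF s1(1)] s1(2) less.prems(2) r1 n3(2)] .
    moreover have "n2 = n3" using less.hyps[OF stp_wt[OF s2(1)] s2(2) less.prems(4) r2 n3(2)] .
    ultimately show ?thesis by simp
  qed
qed

definition nf :: "nat \<Rightarrow> (nat \<Rightarrow> nat) \<Rightarrow> (nat \<Rightarrow> nat) \<Rightarrow> (var \<Rightarrow>\<^sub>0 nat) \<Rightarrow> (var \<Rightarrow>\<^sub>0 nat)" where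
  "nf m a b \<alpha> = (THE n. (stp m a b)\<^sup>*\<^sup>* \<alpha> n \<and> irr m a b n)"

lemma nf_prop:
  assumes ab: "\<forall>l\<in>{1..m}. b l \<le> a l"
  shows "(stp m a b)\<^sup>*\<^sup>* \<alpha> (nf m a b \<alpha>) \<and> irr m a b (nf m a b \<alpha>)"
proof -
  obtain n where n: "(stp m a b)\<^sup>*\<^sup>* \<alpha> n \<and> irr m a b n" using nf_exists by blast
  show ?thesis unfolding nf_def
    by (rule theI[of _ n]) (use n nf_unique[OF ab] in blast)+
qed

lemma nf_eqI:
  assumes ab: "\<forall>l\<in>{1..m}. b l \<le> a l" and "(stp m a b)\<^sup>*\<^sup>* \<alpha> n" "irr m a b n"
  shows "nf m a b \<alpha> = n"
  using nf_prop[OF ab, of \<alpha>] nf_unique[OF ab] assms(2,3) by blast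

lemma nf_stp:
  assumes ab: "\<forall>l\<in>{1..m}. b l \<le> a l" and s: "stp m a b \<alpha> \<beta>"
  shows "nf m a b \<alpha> = nf m a b \<beta>"
proof -
  have "(stp m a b)\<^sup>*\<^sup>* \<alpha> (nf m a b \<beta>)" using nf_prop[OF ab, of \<beta>] s
    by (meson converse_rtranclp_into_rtranclp)
  then show ?thesis using nf_eqI[OF ab] nf_prop[OF ab, of \<beta>] by blast
qed

lemma nf_irr: "\<forall>l\<in>{1..m}. b l \<le> a l \<Longrightarrow> irr m a b \<alpha> \<Longrightarrow> nf m a b \<alpha> = \<alpha>"
  using nf_eqI by blast

definition Mg :: "nat \<Rightarrow> (nat \<Rightarrow> nat) \<Rightarrow> (nat \<Rightarrow> nat) \<Rightarrow> (var \<Rightarrow>\<^sub>0 nat) set" where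
  "Mg m a b = fst ` Rules m a b"

lemma keys_gX: "Poly_Mapping.keys (gX a j i) \<subseteq> {T j, X i}"
  by (auto simp: in_keys_iff lookup_gX split: if_splits)

lemma keys_gW: "Poly_Mapping.keys (gW m a b j) \<subseteq> {T j, X (m + 1)}"
  by (auto simp: in_keys_iff lookup_gW split: if_splits)

lemma keys_rW: "Poly_Mapping.keys (rW m b j) \<subseteq> {T l | l. 1 \<le> l \<and> l \<le> m} \<union> {X j}"
  by (auto simp: in_keys_iff lookup_rW split: if_splits var.splits)

lemma Rules_vars':
  assumes "(u, v) \<in> Rules m a b"
  shows "Poly_Mapping.keys u \<subseteq> vars m \<and> Poly_Mapping.keys v \<subseteq> vars m"
  using assms
proof (cases rule: RulesE)
  case (XX i j)
  then show ?thesis using keys_gX[of a j i] keys_gX[of a i j] by auto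
next
  case (WX j)
  then show ?thesis using keys_gW[of m a b j] keys_rW[of m b j] by auto
qed

lemma Rules_vars:
  assumes "(u, v) \<in> Rules m a b"
  shows "Poly_Mapping.keys u \<subseteq> vars m" "Poly_Mapping.keys v \<subseteq> vars m"
  using Rules_vars'[OF assms] by auto

lemma Gamma0_eq:
  assumes ab: "\<forall>l\<in>{1..m}. b l \<le> a l"
  shows "(Gamma0 m a b :: 'k::field mpoly set) = (\<lambda>(u, v). mono u - mono v) ` Rules m a b"
proof
  show "(Gamma0 m a b :: 'k mpoly set) \<subseteq> (\<lambda>(u, v). mono u - mono v) ` Rules m a b"
  proof
    fix p :: "'k mpoly" assume "p \<in> Gamma0 m a b"
    then obtain i j where h: "p = Pbin m a b (varexp (X i)) (varexp (X j))" "1 \<le> j" "j < i" "i \<le> m + 1"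
      unfolding Gamma0_def by blast
    show "p \<in> (\<lambda>(u, v). mono u - mono v) ` Rules m a b"
    proof (cases "i = m + 1")
      case True
      have jm: "j \<le> m" using h True by simp
      have "b j \<le> a j" using ab h(2) jm by simp
      then have "p = mono (gW m a b j) - mono (rW m b j)" using h(1) h(2) True jm Pbin_WX[of j m b a] by simp
      moreover have "(gW m a b j, rW m b j) \<in> Rules m a b" using h True by (intro RulesWI) auto
      ultimately show ?thesis by force
    next
      case False
      then have im: "i \<le> m" using h by simp
      then have "p = mono (gX a j i) - mono (gX a i j)" using h(1-3) Pbin_XX[of j i m a b] by simp
      moreover have "(gX a j i, gX a i j) \<in> Rules m a b" using h False by (intro RulesXI) auto
      ultimately show ?thesis by force
    qed
  qed
  show "(\<lambda>(u, v). mono u - mono v) ` Rules m a b \<subseteq> (Gamma0 m a b :: 'k mpoly set)"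
  proof
    fix p :: "'k mpoly" assume "p \<in> (\<lambda>(u, v). mono u - mono v) ` Rules m a b"
    then obtain u v where uv: "(u, v) \<in> Rules m a b" "p = mono u - mono v" by auto
    from uv(1) show "p \<in> Gamma0 m a b"
    proof (cases rule: RulesE)
      case (XX i j)
      then have "p = Pbin m a b (varexp (X i)) (varexp (X j))" using uv Pbin_XX by metis
      then show ?thesis unfolding Gamma0_def using XX by (intro CollectI exI[of _ i] exI[of _ j]) auto
    next
      case (WX j)
      have "b j \<le> a j" using ab WX(1,2) by simp
      then have "p = Pbin m a b (varexp (X (m + 1))) (varexp (X j))" using uv WX Pbin_WX[of j m b a] by (simp del: One_nat_def add: eq_commute)
      then show ?thesis unfolding Gamma0_def using WX by (intro CollectI exI[of _ "m + 1"] exI[of _ j]) auto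
    qed
  qed
qed

lemma ideal_gen_Sring: "G \<subseteq> Sring m \<Longrightarrow> ideal_gen m G \<subseteq> Sring m"
  unfolding ideal_gen_def by (auto intro!: Sring_sum Sring_mult)

lemma keys_binom: "u \<noteq> v \<Longrightarrow> Poly_Mapping.keys (mono u - mono v :: 'k::field mpoly) = {u, v}"
  by (auto simp: in_keys_iff lookup_minus lookup_mono split: if_splits)

lemma lead_binom: "lex_less m v u \<Longrightarrow> lead_exp m (mono u - mono v :: 'k::field mpoly) = u"
proof -
  assume l: "lex_less m v u"
  then have "u \<noteq> v" using lex_irrefl by blast
  then show ?thesis using l by (intro lead_exp_eq) (auto simp: keys_binom)
qed

lemma H0_Sring:
  assumes ab: "\<forall>l\<in>{1..m}. b l \<le> a l"
  shows "(H0 m a b :: 'k::field mpoly set) \<subseteq> Sring m"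
  unfolding H0_def Gamma0_eq[OF ab]
  by (rule ideal_gen_Sring) (auto intro!: Sring_diff Sring_mono dest: Rules_vars)

lemma H0_lead:
  assumes ab: "\<forall>l\<in>{1..m}. b l \<le> a l"
    and h: "h \<in> (H0 m a b :: 'k::field mpoly set)" "h \<noteq> 0"
  shows "\<not> irr m a b (lead_exp m h)"
proof
  let ?lam = "lead_exp m h"
  assume irr: "irr m a b ?lam"
  have hS: "h \<in> Sring m" using H0_Sring[OF ab] h(1) by blast
  have lp: "?lam \<in> Poly_Mapping.keys h" "\<forall>\<beta>\<in>Poly_Mapping.keys h. \<beta> \<noteq> ?lam \<longrightarrow> lex_less m \<beta> ?lam"
    using lead_exp_prop[OF hS h(2)] by auto
  have L0: "Lf (nf m a b) ?lam h = 0"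
  proof (rule Lf_ideal[where G = "Gamma0 m a b" and m = m])
    show "h \<in> ideal_gen m (Gamma0 m a b)" using h(1) unfolding H0_def .
    show "\<forall>x\<in>(Gamma0 m a b :: 'k mpoly set). (\<exists>g. x = mono g \<and> (\<forall>\<nu>. Poly_Mapping.keys \<nu> \<subseteq> vars m \<longrightarrow> nf m a b (\<nu> + g) \<noteq> ?lam)) \<or>
      (\<exists>u v. x = mono u - mono v \<and> (\<forall>\<nu>. Poly_Mapping.keys \<nu> \<subseteq> vars m \<longrightarrow> nf m a b (\<nu> + u) = nf m a b (\<nu> + v)))"
    proof
      fix x assume "x \<in> (Gamma0 m a b :: 'k mpoly set)"
      then obtain u v where uv: "(u, v) \<in> Rules m a b" "x = mono u - mono v"
        unfolding Gamma0_eq[OF ab] by auto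
      have "nf m a b (\<nu> + u) = nf m a b (\<nu> + v)" for \<nu>
        using nf_stp[OF ab] uv(1) unfolding stp_def by blast
      then show "(\<exists>g. x = mono g \<and> (\<forall>\<nu>. Poly_Mapping.keys \<nu> \<subseteq> vars m \<longrightarrow> nf m a b (\<nu> + g) \<noteq> ?lam)) \<or>
      (\<exists>u v. x = mono u - mono v \<and> (\<forall>\<nu>. Poly_Mapping.keys \<nu> \<subseteq> vars m \<longrightarrow> nf m a b (\<nu> + u) = nf m a b (\<nu> + v)))"
        using uv(2) by blast
    qed
  qed
  have Leq: "Lf (nf m a b) ?lam h = Poly_Mapping.lookup h ?lam +
      (\<Sum>\<rho>\<in>Poly_Mapping.keys h - {?lam}. if nf m a b \<rho> = ?lam then Poly_Mapping.lookup h \<rho> else 0)"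
  proof -
    have "Lf (nf m a b) ?lam h = (if nf m a b ?lam = ?lam then Poly_Mapping.lookup h ?lam else 0) +
      (\<Sum>\<rho>\<in>Poly_Mapping.keys h - {?lam}. if nf m a b \<rho> = ?lam then Poly_Mapping.lookup h \<rho> else 0)"
      unfolding Lf_def by (rule sum.remove[OF finite_keys lp(1)])
    then show ?thesis using nf_irr[OF ab irr] by simp
  qed
  have "\<exists>\<rho>\<in>Poly_Mapping.keys h - {?lam}. nf m a b \<rho> = ?lam"
  proof (rule ccontr)
    assume "\<not> (\<exists>\<rho>\<in>Poly_Mapping.keys h - {?lam}. nf m a b \<rho> = ?lam)"
    then have "(\<Sum>\<rho>\<in>Poly_Mapping.keys h - {?lam}. if nf m a b \<rho> = ?lam then Poly_Mapping.lookup h \<rho> else 0) = 0"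
      by (intro sum.neutral) auto
    then have "Poly_Mapping.lookup h ?lam = 0" using L0 Leq by simp
    then show False using lp(1) by (simp add: in_keys_iff)
  qed
  then obtain \<rho> where \<rho>: "\<rho> \<in> Poly_Mapping.keys h" "\<rho> \<noteq> ?lam" "nf m a b \<rho> = ?lam" by blast
  have "(stp m a b)\<^sup>*\<^sup>* \<rho> ?lam" using nf_prop[OF ab, of \<rho>] \<rho>(3) by simp
  then have "lex_less m ?lam \<rho>" using rtc_lex \<rho>(2) by blast
  moreover have "lex_less m \<rho> ?lam" using lp(2) \<rho>(1,2) by blast
  ultimately show False using lex_asym by blast
qed

lemma initial_H0:
  assumes ab: "\<forall>l\<in>{1..m}. b l \<le> a l"
  shows "initial_ideal m (H0 m a b :: 'k::field mpoly set) = ideal_gen m (mono ` Mg m a b)"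
proof
  show "initial_ideal m (H0 m a b :: 'k mpoly set) \<subseteq> ideal_gen m (mono ` Mg m a b)"
    unfolding initial_ideal_def
  proof (rule ideal_gen_subset, rule subsetI)
    fix x :: "'k mpoly" assume "x \<in> {mono (lead_exp m p) |p. p \<in> (H0 m a b :: 'k mpoly set) \<and> p \<noteq> 0}"
    then obtain p :: "'k mpoly" where p: "x = mono (lead_exp m p)" "p \<in> H0 m a b" "p \<noteq> 0" by blast
    have pS: "p \<in> Sring m" using H0_Sring[OF ab] p(2) by blast
    have lk: "Poly_Mapping.keys (lead_exp m p) \<subseteq> vars m"
      using lead_exp_prop[OF pS p(3)] SringD[OF pS] by blast
    obtain \<beta> where "stp m a b (lead_exp m p) \<beta>" using H0_lead[OF ab p(2,3)] unfolding irr_def by blast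
    then obtain \<nu> u v where nuv: "(u, v) \<in> Rules m a b" "lead_exp m p = \<nu> + u"
      unfolding stp_def by blast
    have "Poly_Mapping.keys \<nu> \<subseteq> vars m" using lk nuv(2) by (simp add: keys_add_nat)
    then have "mono \<nu> \<in> Sring m" by (rule Sring_mono)
    moreover have "(mono u :: 'k mpoly) \<in> ideal_gen m (mono ` Mg m a b)"
      using nuv(1) unfolding Mg_def by (intro ideal_gen_gen) force
    ultimately have "mono \<nu> * (mono u :: 'k mpoly) \<in> ideal_gen m (mono ` Mg m a b)"
      by (rule ideal_gen_mult)
    then show "x \<in> ideal_gen m (mono ` Mg m a b)" using p(1) nuv(2) by (simp add: mono_mult)
  qed
  show "ideal_gen m (mono ` Mg m a b) \<subseteq> initial_ideal m (H0 m a b :: 'k mpoly set)"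
    unfolding initial_ideal_def
  proof (rule ideal_gen_mono, rule subsetI)
    fix x :: "'k mpoly" assume "x \<in> mono ` Mg m a b"
    then obtain u v where uv: "(u, v) \<in> Rules m a b" "x = mono u" unfolding Mg_def by force
    let ?p = "mono u - mono v :: 'k mpoly"
    have l: "lex_less m v u" using lex_rule uv(1) .
    have "?p \<in> Gamma0 m a b" unfolding Gamma0_eq[OF ab] using uv(1) by force
    then have "?p \<in> H0 m a b" unfolding H0_def by (rule ideal_gen_gen)
    moreover have "?p \<noteq> 0"
    proof
      assume "?p = 0"
      then have "Poly_Mapping.keys ?p = {}" by simp
      moreover have "u \<noteq> v" using l lex_irrefl by blast
      then have "Poly_Mapping.keys ?p = {u, v}" by (rule keys_binom)
      ultimately show False by simp
    qed
    moreover have "lead_exp m ?p = u" using lead_binom[OF l] .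
    ultimately show "x \<in> {mono (lead_exp m p) |p. p \<in> (H0 m a b :: 'k mpoly set) \<and> p \<noteq> 0}" using uv(2) by force
  qed
qed

section \<open>Substitution of exponents\<close>

lift_definition sig :: "nat \<Rightarrow> (var \<Rightarrow>\<^sub>0 nat) \<Rightarrow> (var \<Rightarrow>\<^sub>0 nat)" is
  "\<lambda>k f v. case v of T j \<Rightarrow> f (T j) + (if 1 \<le> j \<and> j < k then f (X (Suc j)) else 0)
                   | X i \<Rightarrow> (if 2 \<le> i \<and> i \<le> k then 0 else f (X i))"
proof -
  fix k :: nat and f :: "var \<Rightarrow> nat"
  assume fin: "finite {v. f v \<noteq> 0}"
  let ?h = "\<lambda>v. case v of X i \<Rightarrow> T (i - 1) | T j \<Rightarrow> T j"
  have "{v. (case v of T j \<Rightarrow> f (T j) + (if 1 \<le> j \<and> j < k then f (X (Suc j)) else 0)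
                   | X i \<Rightarrow> (if 2 \<le> i \<and> i \<le> k then 0 else f (X i))) \<noteq> 0}
        \<subseteq> {v. f v \<noteq> 0} \<union> ?h ` {v. f v \<noteq> 0}"
  proof
    fix v assume v: "v \<in> {v. (case v of T j \<Rightarrow> f (T j) + (if 1 \<le> j \<and> j < k then f (X (Suc j)) else 0)
                   | X i \<Rightarrow> (if 2 \<le> i \<and> i \<le> k then 0 else f (X i))) \<noteq> 0}"
    show "v \<in> {v. f v \<noteq> 0} \<union> ?h ` {v. f v \<noteq> 0}"
    proof (cases v)
      case (T j)
      show ?thesis
      proof (cases "f (T j) = 0")
        case True
        then have "f (X (Suc j)) \<noteq> 0" using v T by (auto split: if_splits)
        moreover have "?h (X (Suc j)) = v" using T by simp
        ultimately show ?thesis by (metis (mono_tags, lifting) UnI2 imageI mem_Collect_eq)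
      next
        case False then show ?thesis using T by simp
      qed
    next
      case (X i)
      then show ?thesis using v by (auto split: if_splits)
    qed
  qed
  moreover have "finite ({v. f v \<noteq> 0} \<union> ?h ` {v. f v \<noteq> 0})" using fin by simp
  ultimately show "finite {v. (case v of T j \<Rightarrow> f (T j) + (if 1 \<le> j \<and> j < k then f (X (Suc j)) else 0)
                   | X i \<Rightarrow> (if 2 \<le> i \<and> i \<le> k then 0 else f (X i))) \<noteq> 0}"
    by (rule finite_subset)
qed

lemma lookup_sig_T [simp]:
  "Poly_Mapping.lookup (sig k \<alpha>) (T j) = Poly_Mapping.lookup \<alpha> (T j) + (if 1 \<le> j \<and> j < k then Poly_Mapping.lookup \<alpha> (X (Suc j)) else 0)"
  by (simp add: sig.rep_eq)

lemma lookup_sig_X [simp]: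
  "Poly_Mapping.lookup (sig k \<alpha>) (X i) = (if 2 \<le> i \<and> i \<le> k then 0 else Poly_Mapping.lookup \<alpha> (X i))"
  by (simp add: sig.rep_eq)

lemma sig_add: "sig k (\<alpha> + \<beta>) = sig k \<alpha> + sig k \<beta>"
proof (rule poly_mapping_eqI)
  fix v show "Poly_Mapping.lookup (sig k (\<alpha> + \<beta>)) v = Poly_Mapping.lookup (sig k \<alpha> + sig k \<beta>) v"
    by (cases v) (auto simp: lookup_add)
qed

lemma sig_id:
  assumes "\<And>i. 2 \<le> i \<Longrightarrow> i \<le> k \<Longrightarrow> Poly_Mapping.lookup \<alpha> (X i) = 0"
  shows "sig k \<alpha> = \<alpha>"
proof (rule poly_mapping_eqI)
  fix v show "Poly_Mapping.lookup (sig k \<alpha>) v = Poly_Mapping.lookup \<alpha> v"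
    using assms by (cases v) auto
qed

lemma sig_normal: "2 \<le> i \<Longrightarrow> i \<le> k \<Longrightarrow> Poly_Mapping.lookup (sig k \<alpha>) (X i) = 0"
  by simp

lemma sig_idem: "sig k (sig k \<alpha>) = sig k \<alpha>"
  by (rule sig_id) simp

lemma sig_zero_iff: "sig k \<alpha> = 0 \<Longrightarrow> \<alpha> = 0"
proof (rule poly_mapping_eqI)
  fix v assume z: "sig k \<alpha> = 0"
  show "Poly_Mapping.lookup \<alpha> v = Poly_Mapping.lookup 0 v"
  proof (cases v)
    case (T j)
    have "Poly_Mapping.lookup (sig k \<alpha>) (T j) = 0" using z by simp
    then show ?thesis using T by simp
  next
    case (X i)
    show ?thesis
    proof (cases "2 \<le> i \<and> i \<le> k")
      case True
      have "Poly_Mapping.lookup (sig k \<alpha>) (T (i - 1)) = 0" using z by simp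
      then show ?thesis using X True by (auto split: if_splits)
    next
      case False
      have "Poly_Mapping.lookup (sig k \<alpha>) (X i) = 0" using z by simp
      then show ?thesis using X False by simp
    qed
  qed
qed

lemma keys_sig:
  assumes "Poly_Mapping.keys \<alpha> \<subseteq> vars m" "k \<le> m + 1"
  shows "Poly_Mapping.keys (sig k \<alpha>) \<subseteq> vars m"
proof
  fix v assume v: "v \<in> Poly_Mapping.keys (sig k \<alpha>)"
  show "v \<in> vars m"
  proof (cases v)
    case (T j)
    then have "T j \<in> Poly_Mapping.keys \<alpha> \<or> (1 \<le> j \<and> j < k)"
      using v by (auto simp: in_keys_iff split: if_splits)
    then show ?thesis
    proof
      assume "T j \<in> Poly_Mapping.keys \<alpha>" then show ?thesis using assms(1) T by blast
    next
      assume "1 \<le> j \<and> j < k" then show ?thesis using assms(2) T by simp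
    qed
  next
    case (X i)
    then have "X i \<in> Poly_Mapping.keys \<alpha>" using v by (auto simp: in_keys_iff split: if_splits)
    then show ?thesis using assms X by blast
  qed
qed

lemma sig_varexp_T: "sig k (varexp (T j)) = varexp (T j)"
  by (rule sig_id) (simp add: lookup_varexp)

lemma sig_varexp_X:
  assumes "2 \<le> i" "i \<le> k"
  shows "sig k (varexp (X i)) = varexp (T (i - 1))"
proof (rule poly_mapping_eqI)
  fix v show "Poly_Mapping.lookup (sig k (varexp (X i))) v = Poly_Mapping.lookup (varexp (T (i - 1))) v"
    using assms by (cases v) (auto simp: lookup_varexp)
qed

lemma sig_varexp_X': "\<not> (2 \<le> i \<and> i \<le> k) \<Longrightarrow> sig k (varexp (X i)) = varexp (X i)"
  by (rule sig_id) (auto simp: lookup_varexp)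

definition fsq :: "nat \<Rightarrow> 'k::field mpoly list" where
  "fsq m = mono (varexp (X 1)) # map (\<lambda>k. mono (varexp (T k)) - mono (varexp (X (k + 1)))) [1..<m + 1]"

lemma length_fsq [simp]: "length (fsq m) = m + 1"
  by (simp add: fsq_def)

lemma fsq_0: "fsq m ! 0 = mono (varexp (X 1))"
  by (simp add: fsq_def)

lemma fsq_k: "1 \<le> k \<Longrightarrow> k \<le> m \<Longrightarrow> fsq m ! k = mono (varexp (T k)) - mono (varexp (X (k + 1)))"
proof -
  assume "1 \<le> k" "k \<le> m"
  then have "[Suc 0..<Suc m] ! (k - Suc 0) = k" by (subst nth_upt) auto
  moreover have "k - Suc 0 < length [Suc 0..<Suc m]" using \<open>1 \<le> k\<close> \<open>k \<le> m\<close> by simp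
  ultimately show ?thesis using \<open>1 \<le> k\<close> by (simp add: fsq_def nth_Cons' nth_map del: upt_Suc)
qed

lemma set_take_fsq:
  assumes "k \<le> m + 1"
  shows "set (take k (fsq m)) = (if k = 0 then {} else
      insert (mono (varexp (X 1))) ((\<lambda>j. mono (varexp (T j)) - mono (varexp (X (j + 1)))) ` {1..<k}))"
proof (cases k)
  case 0 then show ?thesis by simp
next
  case (Suc k')
  have "take k' [1..<m + 1] = [1..<k' + 1]" using assms Suc by (simp add: take_upt min_def del: upt_Suc)
  then show ?thesis using Suc by (simp add: fsq_def take_map del: upt_Suc)
qed

definition Monk :: "nat \<Rightarrow> (nat \<Rightarrow> nat) \<Rightarrow> (nat \<Rightarrow> nat) \<Rightarrow> nat \<Rightarrow> (var \<Rightarrow>\<^sub>0 nat) set" where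
  "Monk m a b k = Mg m a b \<union> (if k = 0 then {} else {varexp (X 1)})"

definition Ik :: "nat \<Rightarrow> (nat \<Rightarrow> nat) \<Rightarrow> (nat \<Rightarrow> nat) \<Rightarrow> nat \<Rightarrow> 'k::field mpoly set" where
  "Ik m a b k = ideal_gen m (mono ` Mg m a b \<union> set (take k (fsq m)))"

definition live :: "nat \<Rightarrow> (nat \<Rightarrow> nat) \<Rightarrow> (nat \<Rightarrow> nat) \<Rightarrow> nat \<Rightarrow> (var \<Rightarrow>\<^sub>0 nat) \<Rightarrow> bool" where
  "live m a b k c \<longleftrightarrow> (\<forall>\<nu>. Poly_Mapping.keys \<nu> \<subseteq> vars m \<longrightarrow> (\<forall>g\<in>Monk m a b k. sig k (\<nu> + g) \<noteq> c))"

lemma keys_varexp [simp]: "Poly_Mapping.keys (varexp v) = {v}"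
  by (simp add: varexp_def)

lemma Monk_vars: "g \<in> Monk m a b k \<Longrightarrow> Poly_Mapping.keys g \<subseteq> vars m"
  unfolding Monk_def Mg_def using Rules_vars(1) by (fastforce split: if_splits)

lemma binom_in_Ik:
  assumes "1 \<le> j" "j < k" "k \<le> m + 1"
  shows "mono (varexp (T j)) - mono (varexp (X (j + 1))) \<in> (Ik m a b k :: 'k::field mpoly set)"
  unfolding Ik_def using assms by (intro ideal_gen_gen) (auto simp: set_take_fsq)

lemma Monk_in_Ik:
  assumes "g \<in> Monk m a b k" "k \<le> m + 1"
  shows "mono g \<in> (Ik m a b k :: 'k::field mpoly set)"
  unfolding Ik_def using assms by (intro ideal_gen_gen) (auto simp: set_take_fsq Monk_def split: if_splits)

lemma Ik_gens:
  assumes "k \<le> m + 1" "x \<in> mono ` Mg m a b \<union> set (take k (fsq m))"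
  shows "(\<exists>g\<in>Monk m a b k. x = mono g) \<or> (\<exists>j. 1 \<le> j \<and> j < k \<and> x = mono (varexp (T j)) - mono (varexp (X (j + 1))))"
  using assms by (auto simp: set_take_fsq Monk_def split: if_splits)

lemma sig_binom:
  assumes "1 \<le> j" "j < k"
  shows "sig k (\<nu> + varexp (T j)) = sig k (\<nu> + varexp (X (j + 1)))"
  using assms by (simp add: sig_add sig_varexp_T sig_varexp_X)

lemma Lf_Ik:
  assumes "k \<le> m + 1" "live m a b k c" "h \<in> (Ik m a b k :: 'k::field mpoly set)"
  shows "Lf (sig k) c h = 0"
proof (rule Lf_ideal[where G = "mono ` Mg m a b \<union> set (take k (fsq m))" and m = m])
  show "h \<in> ideal_gen m (mono ` Mg m a b \<union> set (take k (fsq m)))" using assms(3) unfolding Ik_def .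
  show "\<forall>x\<in>(mono ` Mg m a b \<union> set (take k (fsq m)) :: 'k mpoly set).
    (\<exists>g. x = mono g \<and> (\<forall>\<nu>. Poly_Mapping.keys \<nu> \<subseteq> vars m \<longrightarrow> sig k (\<nu> + g) \<noteq> c)) \<or>
    (\<exists>u v. x = mono u - mono v \<and> (\<forall>\<nu>. Poly_Mapping.keys \<nu> \<subseteq> vars m \<longrightarrow> sig k (\<nu> + u) = sig k (\<nu> + v)))"
  proof (rule ballI)
    fix x :: "'k mpoly" assume "x \<in> mono ` Mg m a b \<union> set (take k (fsq m))"
    then consider (mon) g where "g \<in> Monk m a b k" "x = mono g"
      | (bin) j where "1 \<le> j" "j < k" "x = mono (varexp (T j)) - mono (varexp (X (j + 1)))"
      using Ik_gens[OF assms(1)] by blast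
    then show "(\<exists>g. x = mono g \<and> (\<forall>\<nu>. Poly_Mapping.keys \<nu> \<subseteq> vars m \<longrightarrow> sig k (\<nu> + g) \<noteq> c)) \<or>
    (\<exists>u v. x = mono u - mono v \<and> (\<forall>\<nu>. Poly_Mapping.keys \<nu> \<subseteq> vars m \<longrightarrow> sig k (\<nu> + u) = sig k (\<nu> + v)))"
    proof cases
      case mon then show ?thesis using assms(2) unfolding live_def by blast
    next
      case bin then show ?thesis using sig_binom[OF bin(1,2)] by blast
    qed
  qed
qed

definition xw :: "nat \<Rightarrow> (var \<Rightarrow>\<^sub>0 nat) \<Rightarrow> nat" where
  "xw k \<rho> = (\<Sum>i\<in>{2..k}. Poly_Mapping.lookup \<rho> (X i))"

lemma xw_add: "xw k (\<alpha> + \<beta>) = xw k \<alpha> + xw k \<beta>"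
  by (simp add: xw_def lookup_add sum.distrib)

lemma xw_X: "2 \<le> i \<Longrightarrow> i \<le> k \<Longrightarrow> xw k (varexp (X i)) = 1"
  by (simp add: xw_def lookup_varexp sum.delta)

lemma xw_T: "xw k (varexp (T j)) = 0"
  by (simp add: xw_def lookup_varexp)

lemma S1:
  assumes km: "k \<le> m + 1"
  shows "Poly_Mapping.keys \<rho> \<subseteq> vars m \<Longrightarrow> mono \<rho> - mono (sig k \<rho>) \<in> (Ik m a b k :: 'k::field mpoly set)"
proof (induction "xw k \<rho>" arbitrary: \<rho> rule: less_induct)
  case less
  show ?case
  proof (cases "\<forall>i. 2 \<le> i \<and> i \<le> k \<longrightarrow> Poly_Mapping.lookup \<rho> (X i) = 0")
    case True
    then have "sig k \<rho> = \<rho>" by (intro sig_id) auto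
    then show ?thesis by (simp add: Ik_def)
  next
    case False
    then obtain i where i: "2 \<le> i" "i \<le> k" "Poly_Mapping.lookup \<rho> (X i) \<noteq> 0" by blast
    define \<nu> where "\<nu> = \<rho> - varexp (X i)"
    have pl: "ple (varexp (X i)) \<rho>" using i(3) by (intro pleI) (auto simp: lookup_varexp)
    have r: "\<rho> = \<nu> + varexp (X i)" unfolding \<nu>_def by (rule ple_decomp[OF pl])
    define \<rho>' where "\<rho>' = \<nu> + varexp (T (i - 1))"
    have kn: "Poly_Mapping.keys \<nu> \<subseteq> vars m" using less.prems r by (auto simp: keys_add_nat)
    have k': "Poly_Mapping.keys \<rho>' \<subseteq> vars m" using kn i km by (auto simp: \<rho>'_def keys_add_nat)
    have w: "xw k \<rho>' < xw k \<rho>" using i r by (simp add: \<rho>'_def xw_add xw_X xw_T)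
    have IH: "mono \<rho>' - mono (sig k \<rho>') \<in> (Ik m a b k :: 'k mpoly set)" using less.hyps[OF w k'] .
    have ss: "sig k \<rho>' = sig k \<rho>"
      using i r by (simp add: \<rho>'_def sig_add sig_varexp_T sig_varexp_X)
    have "mono (varexp (T (i - 1))) - mono (varexp (X (i - 1 + 1))) \<in> (Ik m a b k :: 'k mpoly set)"
      using i km by (intro binom_in_Ik) auto
    then have "mono \<nu> * (mono (varexp (T (i - 1))) - mono (varexp (X i)) :: 'k mpoly) \<in> Ik m a b k"
      using i kn unfolding Ik_def by (intro ideal_gen_mult Sring_mono) auto
    then have "mono \<rho>' - mono \<rho> \<in> (Ik m a b k :: 'k mpoly set)"
      using r by (simp add: \<rho>'_def right_diff_distrib mono_mult)
    then have "mono \<rho> - mono \<rho>' \<in> (Ik m a b k :: 'k mpoly set)"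
      unfolding Ik_def using ideal_gen_uminus by fastforce
    from ideal_gen_add[OF this[unfolded Ik_def] IH[unfolded Ik_def]]
    show ?thesis using ss unfolding Ik_def by simp
  qed
qed

lemma S2:
  assumes km: "k \<le> m + 1" and d: "\<not> live m a b k c"
  shows "mono c \<in> (Ik m a b k :: 'k::field mpoly set)"
proof -
  obtain \<nu> g where ng: "Poly_Mapping.keys \<nu> \<subseteq> vars m" "g \<in> Monk m a b k" "sig k (\<nu> + g) = c"
    using d unfolding live_def by blast
  have "mono \<nu> * mono g \<in> (Ik m a b k :: 'k mpoly set)"
    using Monk_in_Ik[OF ng(2) km] ng(1) unfolding Ik_def by (intro ideal_gen_mult Sring_mono)
  then have a1: "mono (\<nu> + g) \<in> (Ik m a b k :: 'k mpoly set)" by (simp add: mono_mult)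
  have "Poly_Mapping.keys (\<nu> + g) \<subseteq> vars m" using ng(1) Monk_vars[OF ng(2)] by (simp add: keys_add_nat)
  then have a2: "mono (\<nu> + g) - mono c \<in> (Ik m a b k :: 'k mpoly set)" using S1[OF km] ng(3) by blast
  have "mono (\<nu> + g) - (mono (\<nu> + g) - mono c) \<in> (Ik m a b k :: 'k mpoly set)"
    using ideal_gen_diff[OF a1[unfolded Ik_def] a2[unfolded Ik_def]] unfolding Ik_def .
  then show ?thesis by simp
qed

lemma single_sum: "Poly_Mapping.single c (sum f A) = (\<Sum>x\<in>A. Poly_Mapping.single c (f x))"
  by (induction A rule: infinite_finite_induct) (auto simp: single_add)

lemma suff:
  assumes km: "k \<le> m + 1" and gS: "g \<in> Sring m"
    and L: "\<forall>c. live m a b k c \<longrightarrow> Lf (sig k) c g = 0"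
  shows "g \<in> (Ik m a b k :: 'k::field mpoly set)"
proof -
  let ?K = "Poly_Mapping.keys g"
  let ?s = "\<Sum>\<rho>\<in>?K. Poly_Mapping.single (sig k \<rho>) (Poly_Mapping.lookup g \<rho>)"
  have e1: "g - ?s = (\<Sum>\<rho>\<in>?K. Poly_Mapping.single 0 (Poly_Mapping.lookup g \<rho>) * (mono \<rho> - mono (sig k \<rho>)))"
    by (subst poly_expand[of g]) (simp add: sum_subtractf right_diff_distrib mono_def mult_single)
  have "g - ?s \<in> (Ik m a b k :: 'k mpoly set)"
    unfolding e1 Ik_def
  proof (rule ideal_gen_sum)
    fix \<rho> assume "\<rho> \<in> ?K"
    then have "mono \<rho> - mono (sig k \<rho>) \<in> (Ik m a b k :: 'k mpoly set)" using S1[OF km] SringD[OF gS] by blast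
    then show "Poly_Mapping.single 0 (Poly_Mapping.lookup g \<rho>) * (mono \<rho> - mono (sig k \<rho>))
        \<in> ideal_gen m (mono ` Mg m a b \<union> set (take k (fsq m)))"
      unfolding Ik_def by (intro ideal_gen_mult Sring_single) auto
  qed
  moreover have e3: "?s = (\<Sum>c\<in>sig k ` ?K. Poly_Mapping.single c (Lf (sig k) c g))"
  proof -
    have "?s = (\<Sum>c\<in>sig k ` ?K. \<Sum>\<rho>\<in>{\<rho> \<in> ?K. sig k \<rho> = c}. Poly_Mapping.single (sig k \<rho>) (Poly_Mapping.lookup g \<rho>))"
      by (rule sum.image_gen) simp
    also have "\<dots> = (\<Sum>c\<in>sig k ` ?K. Poly_Mapping.single c (Lf (sig k) c g))"
    proof (rule sum.cong[OF refl])
      fix c assume "c \<in> sig k ` ?K"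
      have "(\<Sum>\<rho>\<in>{\<rho> \<in> ?K. sig k \<rho> = c}. Poly_Mapping.single (sig k \<rho>) (Poly_Mapping.lookup g \<rho>))
          = (\<Sum>\<rho>\<in>{\<rho> \<in> ?K. sig k \<rho> = c}. Poly_Mapping.single c (Poly_Mapping.lookup g \<rho>))"
        by (rule sum.cong) auto
      also have "\<dots> = Poly_Mapping.single c (\<Sum>\<rho>\<in>{\<rho> \<in> ?K. sig k \<rho> = c}. Poly_Mapping.lookup g \<rho>)"
        by (rule single_sum[symmetric])
      also have "(\<Sum>\<rho>\<in>{\<rho> \<in> ?K. sig k \<rho> = c}. Poly_Mapping.lookup g \<rho>) = Lf (sig k) c g"
        unfolding Lf_def by (rule sum.inter_filter) simp
      finally show "(\<Sum>\<rho>\<in>{\<rho> \<in> ?K. sig k \<rho> = c}. Poly_Mapping.single (sig k \<rho>) (Poly_Mapping.lookup g \<rho>))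
          = Poly_Mapping.single c (Lf (sig k) c g)" .
    qed
    finally show ?thesis .
  qed
  have "?s \<in> (Ik m a b k :: 'k mpoly set)"
    unfolding e3 Ik_def
  proof (rule ideal_gen_sum)
    fix c assume "c \<in> sig k ` ?K"
    show "Poly_Mapping.single c (Lf (sig k) c g) \<in> ideal_gen m (mono ` Mg m a b \<union> set (take k (fsq m)))"
    proof (cases "live m a b k c")
      case True then show ?thesis using L by simp
    next
      case False
      then have "mono c \<in> (Ik m a b k :: 'k mpoly set)" using S2[OF km] by blast
      then have "Poly_Mapping.single 0 (Lf (sig k) c g) * mono c \<in> (Ik m a b k :: 'k mpoly set)"
        unfolding Ik_def by (intro ideal_gen_mult Sring_single) auto
      then show ?thesis unfolding Ik_def by (simp add: mono_def mult_single)
    qed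
  qed
  ultimately have "(g - ?s) + ?s \<in> (Ik m a b k :: 'k mpoly set)"
    unfolding Ik_def by (rule ideal_gen_add)
  then show ?thesis by simp
qed

lemma antidiag:
  fixes G :: "nat \<Rightarrow> nat \<Rightarrow> 'k::zero"
  assumes C: "\<And>p q. L p q \<Longrightarrow> (if p = 0 then 0 else G (p - 1) q) = (if q = 0 then 0 else G p (q - 1))"
    and Q: "\<And>p q. L p q \<Longrightarrow> (\<forall>p'. L p' q) \<or> (\<forall>q'. L p q')"
    and D1: "\<And>p q. L (Suc p) q \<Longrightarrow> L p q"
    and D2: "\<And>p q. L p (Suc q) \<Longrightarrow> L p q"
    and l: "L p q"
  shows "G p q = 0"
proof -
  have row: "\<forall>p. G p q = 0" if "\<forall>p. L p q" for q
    using that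
  proof (induction q)
    case 0
    show ?case
    proof
      fix p show "G p 0 = 0" using C[of "Suc p" 0] "0.prems" by simp
    qed
  next
    case (Suc q)
    then have "\<forall>p. L p q" using D2 by blast
    then have z: "\<forall>p. G p q = 0" using Suc.IH by blast
    show ?case
    proof
      fix p show "G p (Suc q) = 0" using C[of "Suc p" "Suc q"] Suc.prems z by simp
    qed
  qed
  have col: "\<forall>q. G p q = 0" if "\<forall>q. L p q" for p
    using that
  proof (induction p)
    case 0
    show ?case
    proof
      fix q show "G 0 q = 0" using C[of 0 "Suc q"] "0.prems" by simp
    qed
  next
    case (Suc p)
    then have "\<forall>q. L p q" using D1 by blast
    then have z: "\<forall>q. G p q = 0" using Suc.IH by blast
    show ?case
    proof
      fix q show "G (Suc p) q = 0" using C[of "Suc p" "Suc q"] Suc.prems z by simp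
    qed
  qed
  from Q[OF l] show ?thesis using row col by blast
qed

lemma Monk_cases:
  assumes "g \<in> Monk m a b k"
  obtains (X1) "k \<noteq> 0" "g = varexp (X 1)"
    | (XX) i j where "1 \<le> j" "j < i" "i \<le> m" "g = gX a j i"
    | (WX) j where "1 \<le> j" "j \<le> m" "g = gW m a b j"
  using assms unfolding Monk_def Mg_def Rules_def by (auto split: if_splits)

lemma Monk_X_le1: "g \<in> Monk m a b k \<Longrightarrow> Poly_Mapping.lookup g (X n) \<le> 1"
  by (erule Monk_cases) (auto simp: lookup_varexp)

definition Rg :: "nat \<Rightarrow> (var \<Rightarrow>\<^sub>0 nat) \<Rightarrow> (var \<Rightarrow>\<^sub>0 nat) \<Rightarrow> bool" where
  "Rg k B g \<longleftrightarrow> (\<forall>x. x \<noteq> T k \<and> x \<noteq> X (k + 1) \<longrightarrow> Poly_Mapping.lookup (sig k g) x \<le> Poly_Mapping.lookup B x)"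

lemma core:
  assumes k: "1 \<le> k" "k \<le> m"
    and g1: "g1 \<in> Monk m a b k" "Rg k B g1" "Poly_Mapping.lookup g1 (T k) \<ge> 1" "Poly_Mapping.lookup g1 (X (k + 1)) = 0"
    and g2: "g2 \<in> Monk m a b k" "Rg k B g2" "Poly_Mapping.lookup g2 (X (k + 1)) \<ge> 1"
       "Poly_Mapping.lookup g2 (T k) < Poly_Mapping.lookup g1 (T k)"
  shows "\<exists>g3\<in>Monk m a b k. Rg k B g3 \<and> Poly_Mapping.lookup g3 (T k) = 0 \<and> Poly_Mapping.lookup g3 (X (k + 1)) = 0"
proof -
  obtain j' where j': "1 \<le> j'" "j' < k" "g2 = gX a j' (k + 1)"
  proof -
    from g2(1) show ?thesis
    proof (cases rule: Monk_cases)
      case X1 then show ?thesis using g2(3) k by (simp add: lookup_varexp)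
    next
      case (XX i j)
      then have "i = k + 1" using g2(3) by (simp split: if_splits)
      moreover have "j \<noteq> k"
      proof
        assume "j = k"
        then have "Poly_Mapping.lookup g2 (T k) = a k" using XX by simp
        moreover have "Poly_Mapping.lookup g1 (T k) \<le> a k"
          using g1(1) by (cases rule: Monk_cases) (auto simp: lookup_varexp)
        ultimately show False using g2(4) by simp
      qed
      ultimately show ?thesis using XX that by auto
    next
      case (WX j)
      then have km: "k = m" using g2(3) by (simp split: if_splits)
      from g1(1) show ?thesis
      proof (cases rule: Monk_cases)
        case X1 then show ?thesis using g1(3) by (simp add: lookup_varexp)
      next
        case (XX i1 j1)
        then have "j1 = k" using g1(3) by (simp split: if_splits)
        then show ?thesis using XX km by simp
      next
        case (WX j1)
        then show ?thesis using g1(4) km by simp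
      qed
    qed
  qed
  have Tj': "a j' \<le> Poly_Mapping.lookup B (T j')"
  proof -
    have "Poly_Mapping.lookup (sig k g2) (T j') \<le> Poly_Mapping.lookup B (T j')"
      using g2(2) j' unfolding Rg_def by auto
    moreover have "a j' \<le> Poly_Mapping.lookup (sig k g2) (T j')" using j' by simp
    ultimately show ?thesis by linarith
  qed
  from g1(1) show ?thesis
  proof (cases rule: Monk_cases)
    case X1 then show ?thesis using g1(3) by (simp add: lookup_varexp)
  next
    case (XX i j)
    have jk: "j = k" using XX g1(3) by (simp split: if_splits)
    have ik: "i \<noteq> k + 1" using XX g1(4) by (simp split: if_splits)
    have Xi: "1 \<le> Poly_Mapping.lookup B (X i)"
    proof -
      have "Poly_Mapping.lookup (sig k g1) (X i) \<le> Poly_Mapping.lookup B (X i)"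
        using g1(2) ik unfolding Rg_def by auto
      moreover have "Poly_Mapping.lookup (sig k g1) (X i) = 1" using XX jk by simp
      ultimately show ?thesis by simp
    qed
    let ?g3 = "gX a j' i"
    have "?g3 \<in> Monk m a b k" unfolding Monk_def Mg_def using XX jk j'
      by (intro UnI1) (force intro: RulesXI)
    moreover have "sig k ?g3 = ?g3" using XX jk by (intro sig_id) auto
    then have "Rg k B ?g3" unfolding Rg_def using Tj' Xi
      by (auto simp: lookup_gX)
    moreover have "Poly_Mapping.lookup ?g3 (T k) = 0" "Poly_Mapping.lookup ?g3 (X (k + 1)) = 0"
      using j' ik by auto
    ultimately show ?thesis by blast
  next
    case (WX j)
    have jk: "j = k" using WX g1(3) by (simp split: if_splits)
    have km: "k \<noteq> m" using WX g1(4) by (simp split: if_splits)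
    have Xi: "1 \<le> Poly_Mapping.lookup B (X (m + 1))"
    proof -
      have "Poly_Mapping.lookup (sig k g1) (X (m + 1)) \<le> Poly_Mapping.lookup B (X (m + 1))"
        using g1(2) km unfolding Rg_def by auto
      moreover have "Poly_Mapping.lookup (sig k g1) (X (m + 1)) = 1" using WX k by simp
      ultimately show ?thesis by simp
    qed
    let ?g3 = "gW m a b j'"
    have "?g3 \<in> Monk m a b k" unfolding Monk_def Mg_def using k j'
      by (intro UnI1) (force intro: RulesWI)
    moreover have "sig k ?g3 = ?g3" using k by (intro sig_id) auto
    then have "Rg k B ?g3" unfolding Rg_def using Tj' Xi
      by (auto simp: lookup_gW)
    moreover have "Poly_Mapping.lookup ?g3 (T k) = 0" "Poly_Mapping.lookup ?g3 (X (k + 1)) = 0"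
      using j' km k by auto
    ultimately show ?thesis by blast
  qed
qed

lemma minclose:
  assumes k: "1 \<le> k" "k \<le> m"
    and g1: "g1 \<in> Monk m a b k" "Rg k B g1" "Poly_Mapping.lookup g1 (T k) \<le> p1" "Poly_Mapping.lookup g1 (X (k + 1)) \<le> q1"
    and g2: "g2 \<in> Monk m a b k" "Rg k B g2" "Poly_Mapping.lookup g2 (T k) \<le> p2" "Poly_Mapping.lookup g2 (X (k + 1)) \<le> q2"
  shows "\<exists>g3\<in>Monk m a b k. Rg k B g3 \<and> Poly_Mapping.lookup g3 (T k) \<le> min p1 p2 \<and> Poly_Mapping.lookup g3 (X (k + 1)) \<le> min q1 q2"
proof -
  let ?s1 = "Poly_Mapping.lookup g1 (T k)" and ?t1 = "Poly_Mapping.lookup g1 (X (k + 1))"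
  let ?s2 = "Poly_Mapping.lookup g2 (T k)" and ?t2 = "Poly_Mapping.lookup g2 (X (k + 1))"
  have t1: "?t1 \<le> 1" using Monk_X_le1[OF g1(1)] .
  have t2: "?t2 \<le> 1" using Monk_X_le1[OF g2(1)] .
  consider "?s1 \<le> p2 \<and> ?t1 \<le> q2" | "?s2 \<le> p1 \<and> ?t2 \<le> q1" | "?s1 > p2 \<and> ?t2 > q1" | "?t1 > q2 \<and> ?s2 > p1"
    using g1 g2 by linarith
  then show ?thesis
  proof cases
    case 1 then show ?thesis using g1 by auto
  next
    case 2 then show ?thesis using g2 by auto
  next
    case 3
    then have "?t1 = 0" "?t2 \<ge> 1" "?s1 \<ge> 1" "?s2 < ?s1" using g1 g2 t1 t2 by linarith+
    then obtain g3 where "g3 \<in> Monk m a b k" "Rg k B g3" "Poly_Mapping.lookup g3 (T k) = 0" "Poly_Mapping.lookup g3 (X (k + 1)) = 0"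
      using core[OF k g1(1,2) _ _ g2(1,2)] by blast
    then show ?thesis by auto
  next
    case 4
    then have "?t2 = 0" "?t1 \<ge> 1" "?s2 \<ge> 1" "?s1 < ?s2" using g1 g2 t1 t2 by linarith+
    then obtain g3 where "g3 \<in> Monk m a b k" "Rg k B g3" "Poly_Mapping.lookup g3 (T k) = 0" "Poly_Mapping.lookup g3 (X (k + 1)) = 0"
      using core[OF k g2(1,2) _ _ g1(1,2)] by blast
    then show ?thesis by auto
  qed
qed

lemma Lf_shift:
  assumes se: "sig k e = e"
  shows "Lf (sig k) c (g * mono e :: 'k::field mpoly) = (if ple e c then Lf (sig k) (c - e) g else 0)"
proof (cases "ple e c")
  case True
  have "Lf (sig k) c (g * mono e) = (\<Sum>\<rho>\<in>Poly_Mapping.keys g. if sig k (\<rho> + e) = c then Poly_Mapping.lookup g \<rho> else 0)"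
    by (rule Lf_mul_mono)
  also have "\<dots> = (\<Sum>\<rho>\<in>Poly_Mapping.keys g. if sig k \<rho> = c - e then Poly_Mapping.lookup g \<rho> else 0)"
  proof (rule sum.cong[OF refl])
    fix \<rho>
    have "sig k (\<rho> + e) = c \<longleftrightarrow> sig k \<rho> = c - e"
    proof
      assume "sig k (\<rho> + e) = c"
      then have "c = sig k \<rho> + e" using se by (simp add: sig_add)
      then show "sig k \<rho> = c - e" by simp
    next
      assume "sig k \<rho> = c - e"
      then show "sig k (\<rho> + e) = c" using se ple_decomp[OF True] by (simp add: sig_add)
    qed
    then show "(if sig k (\<rho> + e) = c then Poly_Mapping.lookup g \<rho> else 0) = (if sig k \<rho> = c - e then Poly_Mapping.lookup g \<rho> else 0)"
      by simp
  qed
  finally show ?thesis using True by (simp add: Lf_def)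
next
  case False
  have "sig k (\<rho> + e) \<noteq> c" for \<rho>
  proof
    assume "sig k (\<rho> + e) = c"
    then have "c = sig k \<rho> + e" using se by (simp add: sig_add)
    then show False using False ple_add by metis
  qed
  then show ?thesis using False by (simp add: Lf_mul_mono)
qed

definition snorm :: "nat \<Rightarrow> nat \<Rightarrow> (var \<Rightarrow>\<^sub>0 nat) \<Rightarrow> bool" where
  "snorm m k c \<longleftrightarrow> Poly_Mapping.keys c \<subseteq> vars m \<and> (\<forall>i. 2 \<le> i \<and> i \<le> k \<longrightarrow> Poly_Mapping.lookup c (X i) = 0)"

lemma snorm_sig: "Poly_Mapping.keys \<rho> \<subseteq> vars m \<Longrightarrow> k \<le> m + 1 \<Longrightarrow> snorm m k (sig k \<rho>)"
  unfolding snorm_def using keys_sig by auto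

lemma dead_iff:
  assumes km: "k \<le> m + 1" and sn: "snorm m k c"
    and d: "g \<in> Monk m a b k" "ple (sig k g) c"
  shows "\<not> live m a b k c"
proof -
  define \<nu> where "\<nu> = c - sig k g"
  have c: "c = \<nu> + sig k g" unfolding \<nu>_def by (rule ple_decomp[OF d(2)])
  have kn: "Poly_Mapping.keys \<nu> \<subseteq> vars m"
    using sn c unfolding snorm_def by (auto simp: keys_add_nat)
  have "sig k \<nu> = \<nu>"
  proof (rule sig_id)
    fix i assume "2 \<le> i" "i \<le> k"
    then have "Poly_Mapping.lookup c (X i) = 0" using sn unfolding snorm_def by blast
    then show "Poly_Mapping.lookup \<nu> (X i) = 0" using c by (simp add: lookup_add)
  qed
  then have "sig k (\<nu> + g) = c" using c by (simp add: sig_add)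
  then show ?thesis unfolding live_def using kn d(1) by blast
qed

lemma dead_D:
  assumes "\<not> live m a b k c"
  shows "\<exists>g\<in>Monk m a b k. ple (sig k g) c"
proof -
  obtain \<nu> g where "Poly_Mapping.keys \<nu> \<subseteq> vars m" "g \<in> Monk m a b k" "sig k (\<nu> + g) = c"
    using assms unfolding live_def by blast
  then show ?thesis using ple_add[of "sig k g" "sig k \<nu>"] by (auto simp: sig_add)
qed

definition Pq :: "nat \<Rightarrow> (var \<Rightarrow>\<^sub>0 nat) \<Rightarrow> nat \<Rightarrow> nat \<Rightarrow> (var \<Rightarrow>\<^sub>0 nat)" where
  "Pq k B p q = B + Poly_Mapping.single (T k) p + Poly_Mapping.single (X (k + 1)) q"

lemma lookup_Pq: "Poly_Mapping.lookup (Pq k B p q) x =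
   Poly_Mapping.lookup B x + (if x = T k then p else 0) + (if x = X (k + 1) then q else 0)"
  by (simp add: Pq_def lookup_add lookup_single when_def eq_commute)

lemma ple_P:
  assumes B: "Poly_Mapping.lookup B (T k) = 0" "Poly_Mapping.lookup B (X (k + 1)) = 0"
  shows "ple (sig k g) (Pq k B p q) \<longleftrightarrow>
     Poly_Mapping.lookup g (T k) \<le> p \<and> Poly_Mapping.lookup g (X (k + 1)) \<le> q \<and> Rg k B g"
proof
  assume h: "ple (sig k g) (Pq k B p q)"
  have "Poly_Mapping.lookup (sig k g) (T k) \<le> Poly_Mapping.lookup (Pq k B p q) (T k)" using pleD[OF h] .
  then have 1: "Poly_Mapping.lookup g (T k) \<le> p" using B by (simp add: lookup_Pq)
  have "Poly_Mapping.lookup (sig k g) (X (k + 1)) \<le> Poly_Mapping.lookup (Pq k B p q) (X (k + 1))" using pleD[OF h] .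
  then have 2: "Poly_Mapping.lookup g (X (k + 1)) \<le> q" using B by (simp add: lookup_Pq)
  have 3: "Rg k B g" unfolding Rg_def
  proof (intro allI impI)
    fix x assume "x \<noteq> T k \<and> x \<noteq> X (k + 1)"
    then show "Poly_Mapping.lookup (sig k g) x \<le> Poly_Mapping.lookup B x"
      using pleD[OF h, of x] by (simp add: lookup_Pq)
  qed
  show "Poly_Mapping.lookup g (T k) \<le> p \<and> Poly_Mapping.lookup g (X (k + 1)) \<le> q \<and> Rg k B g"
    using 1 2 3 by blast
next
  assume h: "Poly_Mapping.lookup g (T k) \<le> p \<and> Poly_Mapping.lookup g (X (k + 1)) \<le> q \<and> Rg k B g"
  show "ple (sig k g) (Pq k B p q)"
  proof (rule pleI)
    fix x show "Poly_Mapping.lookup (sig k g) x \<le> Poly_Mapping.lookup (Pq k B p q) x"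
    proof (cases "x = T k \<or> x = X (k + 1)")
      case True then show ?thesis using h B by (auto simp: lookup_Pq)
    next
      case False then show ?thesis using h unfolding Rg_def by (auto simp: lookup_Pq)
    qed
  qed
qed

lemma Pq_addT: "Pq k B p q + varexp (T k) = Pq k B (Suc p) q"
  by (rule poly_mapping_eqI) (simp add: lookup_Pq lookup_add lookup_varexp)

lemma Pq_addX: "Pq k B p q + varexp (X (k + 1)) = Pq k B p (Suc q)"
  by (rule poly_mapping_eqI) (simp add: lookup_Pq lookup_add lookup_varexp)

lemma ple_T_Pq: "ple (varexp (T k)) (Pq k B p q) \<longleftrightarrow> 1 \<le> p \<or> 1 \<le> Poly_Mapping.lookup B (T k)"
proof
  assume "ple (varexp (T k)) (Pq k B p q)"
  from pleD[OF this, of "T k"] show "1 \<le> p \<or> 1 \<le> Poly_Mapping.lookup B (T k)"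
    by (simp add: lookup_Pq lookup_varexp; linarith)
next
  assume "1 \<le> p \<or> 1 \<le> Poly_Mapping.lookup B (T k)"
  then show "ple (varexp (T k)) (Pq k B p q)"
    by (intro pleI) (auto simp: lookup_Pq lookup_varexp)
qed

lemma ple_X_Pq: "ple (varexp (X (k + 1))) (Pq k B p q) \<longleftrightarrow> 1 \<le> q \<or> 1 \<le> Poly_Mapping.lookup B (X (k + 1))"
proof
  assume "ple (varexp (X (k + 1))) (Pq k B p q)"
  from pleD[OF this, of "X (k + 1)"] show "1 \<le> q \<or> 1 \<le> Poly_Mapping.lookup B (X (k + 1))"
    by (simp add: lookup_Pq lookup_varexp; linarith)
next
  assume "1 \<le> q \<or> 1 \<le> Poly_Mapping.lookup B (X (k + 1))"
  then show "ple (varexp (X (k + 1))) (Pq k B p q)"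
    by (intro pleI) (auto simp: lookup_Pq lookup_varexp)
qed

lemma Pq_subT: "1 \<le> p \<Longrightarrow> Pq k B p q - varexp (T k) = Pq k B (p - 1) q"
  by (rule poly_mapping_eqI) (simp add: lookup_Pq lookup_minus lookup_varexp)

lemma Pq_subX: "1 \<le> q \<Longrightarrow> Pq k B p q - varexp (X (k + 1)) = Pq k B p (q - 1)"
  by (rule poly_mapping_eqI) (simp add: lookup_Pq lookup_minus lookup_varexp)

lemma regk:
  assumes k: "1 \<le> k" "k \<le> m" and gS: "g \<in> Sring m"
    and fg: "(mono (varexp (T k)) - mono (varexp (X (k + 1)))) * g \<in> (Ik m a b k :: 'k::field mpoly set)"
  shows "g \<in> (Ik m a b k :: 'k mpoly set)"
proof (rule suff)
  show km: "k \<le> m + 1" using k by simp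
  show "g \<in> Sring m" by (rule gS)
  show "\<forall>c. live m a b k c \<longrightarrow> Lf (sig k) c g = 0"
  proof (intro allI impI)
    fix c0 assume lc: "live m a b k c0"
    show "Lf (sig k) c0 g = 0"
    proof (cases "snorm m k c0")
      case False
      have "sig k \<rho> \<noteq> c0" if "\<rho> \<in> Poly_Mapping.keys g" for \<rho>
        using snorm_sig[OF SringD[OF gS that] km] False by auto
      then show ?thesis unfolding Lf_def by (intro sum.neutral) auto
    next
      case True
      define B where "B = c0 - Poly_Mapping.single (T k) (Poly_Mapping.lookup c0 (T k))
                        - Poly_Mapping.single (X (k + 1)) (Poly_Mapping.lookup c0 (X (k + 1)))"
      have lB: "Poly_Mapping.lookup B x = (if x = T k \<or> x = X (k + 1) then 0 else Poly_Mapping.lookup c0 x)" for x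
        by (auto simp: B_def lookup_minus lookup_single when_def)
      have B0: "Poly_Mapping.lookup B (T k) = 0" "Poly_Mapping.lookup B (X (k + 1)) = 0" by (simp_all add: lB)
      have c0eq: "Pq k B (Poly_Mapping.lookup c0 (T k)) (Poly_Mapping.lookup c0 (X (k + 1))) = c0"
        by (rule poly_mapping_eqI) (auto simp: lookup_Pq lB)
      have snP: "snorm m k (Pq k B p q)" for p q
        unfolding snorm_def
      proof (intro conjI allI impI subsetI)
        fix x assume x: "x \<in> Poly_Mapping.keys (Pq k B p q)"
        show "x \<in> vars m"
        proof (cases "x = T k \<or> x = X (k + 1)")
          case True then show ?thesis using k by auto
        next
          case False
          then have "x \<in> Poly_Mapping.keys c0" using x by (auto simp: in_keys_iff lookup_Pq lB)
          then show ?thesis using True unfolding snorm_def by blast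
        qed
      next
        fix i assume "2 \<le> i \<and> i \<le> k"
        then show "Poly_Mapping.lookup (Pq k B p q) (X i) = 0"
          using True unfolding snorm_def by (auto simp: lookup_Pq lB)
      qed
      define L where "L p q = live m a b k (Pq k B p q)" for p q
      define G where "G p q = Lf (sig k) (Pq k B p q) g" for p q
      have seT: "sig k (varexp (T k)) = varexp (T k)" by (rule sig_varexp_T)
      have seX: "sig k (varexp (X (k + 1))) = varexp (X (k + 1))" by (rule sig_varexp_X') simp
      have C: "(if p = 0 then 0 else G (p - 1) q) = (if q = 0 then 0 else G p (q - 1))" if "L p q" for p q
      proof -
        have "Lf (sig k) (Pq k B p q) ((mono (varexp (T k)) - mono (varexp (X (k + 1)))) * g) = 0"
          using Lf_Ik[OF km _ fg] that unfolding L_def by blast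
        moreover have "(mono (varexp (T k)) - mono (varexp (X (k + 1)))) * g
            = g * mono (varexp (T k)) - g * (mono (varexp (X (k + 1))) :: 'k mpoly)"
          by (simp add: algebra_simps)
        ultimately have "Lf (sig k) (Pq k B p q) (g * mono (varexp (T k)))
            = Lf (sig k) (Pq k B p q) (g * mono (varexp (X (k + 1))))"
          by (simp add: Lf_diff)
        then show ?thesis
          unfolding Lf_shift[OF seT] Lf_shift[OF seX] ple_T_Pq ple_X_Pq B0 G_def
          by (auto simp: Pq_subT Pq_subX[simplified])
      qed
      have D1: "L p q" if "L (Suc p) q" for p q
      proof (rule ccontr)
        assume "\<not> L p q"
        then obtain \<nu> g' where ng: "Poly_Mapping.keys \<nu> \<subseteq> vars m" "g' \<in> Monk m a b k" "sig k (\<nu> + g') = Pq k B p q"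
          unfolding L_def live_def by blast
        have e: "(\<nu> + varexp (T k)) + g' = (\<nu> + g') + varexp (T k)"
          by (simp add: algebra_simps)
        have "sig k ((\<nu> + varexp (T k)) + g') = sig k (\<nu> + g') + sig k (varexp (T k))"
          by (simp only: e sig_add)
        also have "\<dots> = Pq k B p q + varexp (T k)" by (simp only: ng(3) seT)
        also have "\<dots> = Pq k B (Suc p) q" by (rule Pq_addT)
        finally have "sig k ((\<nu> + varexp (T k)) + g') = Pq k B (Suc p) q" .
        moreover have "Poly_Mapping.keys (\<nu> + varexp (T k)) \<subseteq> vars m" using ng(1) k by (simp add: keys_add_nat)
        ultimately show False using that ng(2) unfolding L_def live_def by blast
      qed
      have D2: "L p q" if "L p (Suc q)" for p q
      proof (rule ccontr)
        assume "\<not> L p q"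
        then obtain \<nu> g' where ng: "Poly_Mapping.keys \<nu> \<subseteq> vars m" "g' \<in> Monk m a b k" "sig k (\<nu> + g') = Pq k B p q"
          unfolding L_def live_def by blast
        have e: "(\<nu> + varexp (X (k + 1))) + g' = (\<nu> + g') + varexp (X (k + 1))"
          by (simp add: algebra_simps)
        have "sig k ((\<nu> + varexp (X (k + 1))) + g') = sig k (\<nu> + g') + sig k (varexp (X (k + 1)))"
          by (simp only: e sig_add)
        also have "\<dots> = Pq k B p q + varexp (X (k + 1))" by (simp only: ng(3) seX)
        also have "\<dots> = Pq k B p (Suc q)" by (rule Pq_addX)
        finally have "sig k ((\<nu> + varexp (X (k + 1))) + g') = Pq k B p (Suc q)" .
        moreover have "Poly_Mapping.keys (\<nu> + varexp (X (k + 1))) \<subseteq> vars m" using ng(1) k by (simp add: keys_add_nat)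
        ultimately show False using that ng(2) unfolding L_def live_def by blast
      qed
      have Q: "(\<forall>p'. L p' q) \<or> (\<forall>q'. L p q')" if "L p q" for p q
      proof (rule ccontr)
        assume "\<not> ((\<forall>p'. L p' q) \<or> (\<forall>q'. L p q'))"
        then obtain p' q' where d1: "\<not> L p' q" and d2: "\<not> L p q'" by blast
        obtain g1 where g1: "g1 \<in> Monk m a b k" "ple (sig k g1) (Pq k B p' q)"
          using dead_D d1 unfolding L_def by blast
        obtain g2 where g2: "g2 \<in> Monk m a b k" "ple (sig k g2) (Pq k B p q')"
          using dead_D d2 unfolding L_def by blast
        have h1: "Poly_Mapping.lookup g1 (T k) \<le> p'" "Poly_Mapping.lookup g1 (X (k + 1)) \<le> q" "Rg k B g1"
          using g1(2) unfolding ple_P[OF B0] by auto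
        have h2: "Poly_Mapping.lookup g2 (T k) \<le> p" "Poly_Mapping.lookup g2 (X (k + 1)) \<le> q'" "Rg k B g2"
          using g2(2) unfolding ple_P[OF B0] by auto
        obtain g3 where g3: "g3 \<in> Monk m a b k" "Rg k B g3" "Poly_Mapping.lookup g3 (T k) \<le> min p' p"
            "Poly_Mapping.lookup g3 (X (k + 1)) \<le> min q q'"
          using minclose[OF k g1(1) h1(3) h1(1) h1(2) g2(1) h2(3) h2(1) h2(2)] by blast
        have "ple (sig k g3) (Pq k B p q)" unfolding ple_P[OF B0] using g3 by auto
        then have "\<not> L p q" unfolding L_def using dead_iff[OF km snP g3(1)] by blast
        then show False using that by blast
      qed
      have lc': "L (Poly_Mapping.lookup c0 (T k)) (Poly_Mapping.lookup c0 (X (k + 1)))"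
        unfolding L_def c0eq by (rule lc)
      have "G (Poly_Mapping.lookup c0 (T k)) (Poly_Mapping.lookup c0 (X (k + 1))) = 0"
        by (rule antidiag[where G = G and L = L]) (erule C, erule Q, erule D1, erule D2, rule lc')
      then show ?thesis unfolding G_def c0eq .
    qed
  qed
qed

lemma sig0: "sig 0 \<alpha> = \<alpha>"
  by (rule sig_id) auto

lemma Mg_X1: "g \<in> Mg m a b \<Longrightarrow> Poly_Mapping.lookup g (X 1) = 0"
  unfolding Mg_def by (auto elim!: RulesE)

lemma reg0:
  assumes gS: "g \<in> Sring m"
    and fg: "mono (varexp (X 1)) * g \<in> (Ik m a b 0 :: 'k::field mpoly set)"
  shows "g \<in> (Ik m a b 0 :: 'k mpoly set)"
proof (rule suff)
  show "0 \<le> m + 1" by simp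
  show "g \<in> Sring m" by (rule gS)
  show "\<forall>c. live m a b 0 c \<longrightarrow> Lf (sig 0) c g = 0"
  proof (intro allI impI)
    fix c assume lc: "live m a b 0 c"
    let ?e = "varexp (X 1)"
    have lc': "live m a b 0 (c + ?e)"
      unfolding live_def
    proof (intro allI impI ballI notI)
      fix \<nu> g' assume kn: "Poly_Mapping.keys \<nu> \<subseteq> vars m" and g': "g' \<in> Monk m a b 0"
        and eq: "sig 0 (\<nu> + g') = c + ?e"
      have gM: "g' \<in> Mg m a b" using g' by (simp add: Monk_def)
      have eq': "\<nu> + g' = c + ?e" using eq by (simp add: sig0)
      have "ple ?e \<nu>"
      proof (rule pleI)
        fix x
        have "Poly_Mapping.lookup (\<nu> + g') x = Poly_Mapping.lookup (c + ?e) x" using eq' by simp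
        then show "Poly_Mapping.lookup ?e x \<le> Poly_Mapping.lookup \<nu> x"
          using Mg_X1[OF gM] by (auto simp: lookup_add lookup_varexp split: if_splits)
      qed
      define \<nu>' where "\<nu>' = \<nu> - ?e"
      have nu: "\<nu> = \<nu>' + ?e" unfolding \<nu>'_def by (rule ple_decomp) fact
      have "(\<nu>' + g') + ?e = c + ?e" using eq' nu by (simp add: algebra_simps)
      then have "\<nu>' + g' = c" by (rule add_right_imp_eq)
      moreover have "Poly_Mapping.keys \<nu>' \<subseteq> vars m" using kn nu by (auto simp: keys_add_nat)
      ultimately show False using lc gM unfolding live_def Monk_def by (auto simp: sig0)
    qed
    have "Lf (sig 0) (c + ?e) (mono ?e * g) = 0" using Lf_Ik[OF _ lc' fg] by simp
    moreover have "mono ?e * g = g * mono ?e" by (rule mult.commute)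
    ultimately have z: "Lf (sig 0) (c + ?e) (g * mono ?e) = 0" by metis
    have "Lf (sig 0) (c + ?e) (g * mono ?e) = Lf (sig 0) (c + ?e - ?e) g"
      using Lf_shift[of 0 ?e "c + ?e" g, OF sig0] ple_add[of ?e c] by simp
    then show "Lf (sig 0) c g = 0" using z by simp
  qed
qed

lemma Monk_nonzero: "g \<in> Monk m a b k \<Longrightarrow> g \<noteq> 0"
proof (erule Monk_cases)
  show "g = varexp (X 1) \<Longrightarrow> g \<noteq> 0"
    by (metis lookup_varexp lookup_zero zero_neq_one)
next
  fix i j assume "g = gX a j i"
  then have "Poly_Mapping.lookup g (X i) = 1" by simp
  then show "g \<noteq> 0" by auto
next
  fix j assume "g = gW m a b j"
  then have "Poly_Mapping.lookup g (X (m + 1)) = 1" by simp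
  then show "g \<noteq> 0" by auto
qed

lemma one_notin:
  "(1 :: 'k::field mpoly) \<notin> Ik m a b (m + 1)"
proof
  assume one: "(1 :: 'k mpoly) \<in> Ik m a b (m + 1)"
  have lv: "live m a b (m + 1) 0"
    unfolding live_def
  proof (intro allI impI ballI notI)
    fix \<nu> g' assume "Poly_Mapping.keys \<nu> \<subseteq> vars m" "g' \<in> Monk m a b (m + 1)" "sig (m + 1) (\<nu> + g') = 0"
    then have z: "\<nu> + g' = 0" "g' \<noteq> 0" using sig_zero_iff Monk_nonzero by blast+
    have "g' = 0"
    proof (rule poly_mapping_eqI)
      fix x have "Poly_Mapping.lookup (\<nu> + g') x = 0" using z(1) by simp
      then show "Poly_Mapping.lookup g' x = Poly_Mapping.lookup 0 x" by (simp add: lookup_add)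
    qed
    then show False using z(2) by simp
  qed
  have "Lf (sig (m + 1)) 0 (1 :: 'k mpoly) = 0" using Lf_Ik[OF _ lv one] by simp
  moreover have "Lf (sig (m + 1)) 0 (1 :: 'k mpoly) = 1"
  proof -
    have "sig (m + 1) 0 = 0" by (rule sig_id) simp
    then show ?thesis by (simp add: Lf_def keys_one lookup_one)
  qed
  ultimately show False by simp
qed

lemma varexp_nz: "varexp v \<noteq> 0"
  using keys_varexp[of v] by force

lemma lookup_mono_varexp0: "Poly_Mapping.lookup (mono (varexp v) :: 'k::field mpoly) 0 = 0"
  using varexp_nz[of v] by (simp add: lookup_mono)

lemma fsq_max:
  assumes "1 \<le> m"
  shows "set (fsq m :: 'k::field mpoly list) \<subseteq> max_ideal m"
proof -
  have "set (fsq m :: 'k mpoly list) = set (take (m + 1) (fsq m))" by simp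
  also have "\<dots> = insert (mono (varexp (X 1))) ((\<lambda>j. mono (varexp (T j)) - mono (varexp (X (j + 1)))) ` {1..<m + 1})"
    by (subst set_take_fsq) simp_all
  finally have e: "set (fsq m :: 'k mpoly list) = \<dots>" .
  show ?thesis
    unfolding e max_ideal_def
  proof (intro subsetI CollectI conjI)
    fix x :: "'k mpoly"
    assume x: "x \<in> insert (mono (varexp (X 1))) ((\<lambda>j. mono (varexp (T j)) - mono (varexp (X (j + 1)))) ` {1..<m + 1})"
    then show "x \<in> Sring m" using assms by (auto intro!: Sring_mono Sring_diff)
    show "Poly_Mapping.lookup x 0 = 0" using x by (auto simp: lookup_minus lookup_mono_varexp0)
  qed
qed

theorem proposition3p4:
  fixes m :: nat and a b :: "nat \<Rightarrow> nat"
  assumes "m \<ge> 3"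
    and "\<forall>i\<in>{1..m}. b i < a i"
    and "\<exists>i\<in>{1..m}. \<exists>j\<in>{1..m}. i \<noteq> j \<and> b i \<noteq> 0 \<and> b j \<noteq> 0"
  shows "depth_quot m (initial_ideal m (H0 m a b :: 'k::field mpoly set)) \<ge> enat (m + 1)"
proof -
  have ab: "\<forall>l\<in>{1..m}. b l \<le> a l" using assms(2) by (simp add: less_imp_le)
  have m1: "1 \<le> m" using assms(1) by simp
  let ?J = "initial_ideal m (H0 m a b :: 'k mpoly set)"
  have J: "?J = ideal_gen m (mono ` Mg m a b)" by (rule initial_H0[OF ab])
  have I: "ideal_gen m (?J \<union> set (take k (fsq m))) = (Ik m a b k :: 'k mpoly set)" for k
    unfolding J Ik_def by (rule ideal_gen_absorb)
  have r1: "set (fsq m :: 'k mpoly list) \<subseteq> max_ideal m" by (rule fsq_max[OF m1])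
  have r2: "\<forall>k < length (fsq m :: 'k mpoly list). \<forall>g\<in>Sring m.
        fsq m ! k * g \<in> ideal_gen m (?J \<union> set (take k (fsq m))) \<longrightarrow> g \<in> ideal_gen m (?J \<union> set (take k (fsq m)))"
  proof (intro allI impI ballI)
    fix k and g :: "'k mpoly"
    assume k: "k < length (fsq m :: 'k mpoly list)" and gS: "g \<in> Sring m"
      and fg: "fsq m ! k * g \<in> ideal_gen m (?J \<union> set (take k (fsq m)))"
    show "g \<in> ideal_gen m (?J \<union> set (take k (fsq m)))"
      unfolding I
    proof (cases "k = 0")
      case True
      then show "g \<in> Ik m a b k" using reg0[OF gS] fg unfolding I by (simp add: fsq_0)
    next
      case False
      then have "1 \<le> k" "k \<le> m" using k by auto
      then show "g \<in> Ik m a b k" using regk[OF _ _ gS] fg unfolding I by (simp add: fsq_k)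
    qed
  qed
  have r3: "ideal_gen m (?J \<union> set (fsq m :: 'k mpoly list)) \<noteq> Sring m"
  proof
    assume "ideal_gen m (?J \<union> set (fsq m :: 'k mpoly list)) = Sring m"
    moreover have "ideal_gen m (?J \<union> set (fsq m :: 'k mpoly list)) = Ik m a b (m + 1)"
      using I[of "m + 1"] by simp
    ultimately have "(1 :: 'k mpoly) \<in> Ik m a b (m + 1)" using Sring_one by metis
    then show False using one_notin by blast
  qed
  have "regular_seq m ?J (fsq m :: 'k mpoly list)"
    unfolding regular_seq_def using r1 r2 r3 by blast
  then have "enat (m + 1) \<in> {enat (length fs) |fs. regular_seq m ?J fs}"
    by (intro CollectI exI[of _ "fsq m :: 'k mpoly list"]) simp
  then show ?thesis unfolding depth_quot_def by (rule Sup_upper)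
qed

end
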